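(* Let $X_1,\dots,X_n$ be independent and identically distributed random variables with a common continuous distribution. Let $T\subset\{1,\dots,n\}$, let $k\in\{1,\dots,|T|\}$, let $X_{(k);T}$ denote the $k$-th order statistic of $(X_i)_{i\in T}$, and let \[Y_1=g\big(X_{(k);T}\big)\] for a non-decreasing function $g$. For $j=2,\dots,M$ let $Y_j=f_j(X_1,\dots,X_n)$ for some entrywise non-decreasing function $f_j$. Then $(Y_1,\dots,Y_M)$ is PRDS with respect to $\{1\}$.
   Context: For vectors, $x\preceq y$ means $x_i\le y_i$ for all $i$; a function is non-decreasing if $x\preceq y$ implies $f(x)\le f(y)$. A set $D\subset\mathbb R^m$ is non-decreasing if $x\preceq y$, $x\in D$ imply $y\in D$. A random vector $Y\in\mathbb R^m$ is PRDS with respect to $T\subset\{1,\dots,m\}$ if $t\mapsto\Pr(Y\in D\mid Y_i=t)$ is non-decreasing for every non-decreasing set $D$ and every $i\in T$. *)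

theory Defs
  imports "HOL-Probability.Probability"
begin

text \<open>Vectors in R^m are modelled as extensional functions on the index set {1..m},
  i.e. elements of the space of the product measure PiM {1..m} (\<lambda>_. borel).\<close>

definition vec_space :: "nat \<Rightarrow> (nat \<Rightarrow> real) measure" where
  "vec_space m = PiM {1..m} (\<lambda>_. borel)"

definition vec_le :: "nat \<Rightarrow> (nat \<Rightarrow> real) \<Rightarrow> (nat \<Rightarrow> real) \<Rightarrow> bool" where
  "vec_le m x y \<longleftrightarrow> (\<forall>i\<in>{1..m}. x i \<le> y i)"

definition nondecr_fun :: "nat \<Rightarrow> ((nat \<Rightarrow> real) \<Rightarrow> real) \<Rightarrow> bool" where
  "nondecr_fun m f \<longleftrightarrow>
     (\<forall>x\<in>space (vec_space m). \<forall>y\<in>space (vec_space m). vec_le m x y \<longrightarrow> f x \<le> f y)"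

definition nondecr_set :: "nat \<Rightarrow> (nat \<Rightarrow> real) set \<Rightarrow> bool" where
  "nondecr_set m D \<longleftrightarrow>
     D \<subseteq> space (vec_space m) \<and>
     (\<forall>x\<in>D. \<forall>y\<in>space (vec_space m). vec_le m x y \<longrightarrow> y \<in> D)"

definition rvec :: "nat \<Rightarrow> (nat \<Rightarrow> 'a \<Rightarrow> real) \<Rightarrow> 'a \<Rightarrow> (nat \<Rightarrow> real)" where
  "rvec m Y \<omega> = (\<lambda>j\<in>{1..m}. Y j \<omega>)"

text \<open>k-th order statistic (k \<ge> 1, k-th smallest) of (x_i)_{i \<in> T}.\<close>
definition order_stat :: "nat set \<Rightarrow> nat \<Rightarrow> (nat \<Rightarrow> real) \<Rightarrow> real" where
  "order_stat T k x = sort (map x (sorted_list_of_set T)) ! (k - 1)"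

text \<open>PRDS of (Y_1,...,Y_m) w.r.t. S: for every i \<in> S and every (Borel) non-decreasing
  set D, the conditional probability Pr(Y \<in> D | Y_i = t) has a version that is a
  non-decreasing function of t, i.e. there is a non-decreasing h with
  h(Y_i) = E[1_{Y \<in> D} | \<sigma>(Y_i)] almost surely.\<close>
definition PRDS :: "'a measure \<Rightarrow> nat \<Rightarrow> (nat \<Rightarrow> 'a \<Rightarrow> real) \<Rightarrow> nat set \<Rightarrow> bool" where
  "PRDS M m Y S \<longleftrightarrow>
     (\<forall>i\<in>S. \<forall>D\<in>sets (vec_space m). nondecr_set m D \<longrightarrow>
        (\<exists>h :: real \<Rightarrow> real. mono h \<and>
           (AE \<omega> in M. h (Y i \<omega>) =
              real_cond_exp M (vimage_algebra (space M) (Y i) borel)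
                 (indicator {\<omega>\<in>space M. rvec m Y \<omega> \<in> D}) \<omega>)))"

end

theory Submission
  imports Defs
begin
lemma sorted_nth_le_iff_count:
  fixes ys :: "real list"
  assumes "sorted ys" "1 \<le> k" "k \<le> length ys"
  shows "ys ! (k - 1) \<le> c \<longleftrightarrow> k \<le> length (filter (\<lambda>v. v \<le> c) ys)"
proof
  assume h: "ys ! (k - 1) \<le> c"
  have "{0..<k} \<subseteq> {i. i < length ys \<and> ys ! i \<le> c}"
  proof
    fix i assume "i \<in> {0..<k}"
    then have "i \<le> k - 1" "i < length ys" using assms by auto
    then have "ys ! i \<le> ys ! (k - 1)" using assms by (intro sorted_nth_mono) auto
    then show "i \<in> {i. i < length ys \<and> ys ! i \<le> c}" using h \<open>i < length ys\<close> by auto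
  qed
  then have "card {0..<k} \<le> card {i. i < length ys \<and> ys ! i \<le> c}"
    by (intro card_mono) auto
  then show "k \<le> length (filter (\<lambda>v. v \<le> c) ys)"
    by (simp add: length_filter_conv_card)
next
  assume h: "k \<le> length (filter (\<lambda>v. v \<le> c) ys)"
  show "ys ! (k - 1) \<le> c"
  proof (rule ccontr)
    assume "\<not> ys ! (k - 1) \<le> c"
    have "{i. i < length ys \<and> ys ! i \<le> c} \<subseteq> {0..<k-1}"
    proof
      fix i assume i: "i \<in> {i. i < length ys \<and> ys ! i \<le> c}"
      show "i \<in> {0..<k-1}"
      proof (rule ccontr)
        assume "i \<notin> {0..<k-1}"
        then have "k - 1 \<le> i" by auto
        then have "ys ! (k - 1) \<le> ys ! i" using assms i by (intro sorted_nth_mono) auto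
        then show False using i \<open>\<not> ys ! (k - 1) \<le> c\<close> by auto
      qed
    qed
    then have "card {i. i < length ys \<and> ys ! i \<le> c} \<le> k - 1"
      by (metis card_atLeastLessThan card_mono diff_zero finite_atLeastLessThan)
    then show False using h assms by (simp add: length_filter_conv_card)
  qed
qed

lemma order_stat_le_iff:
  assumes "finite T" "1 \<le> k" "k \<le> card T"
  shows "order_stat T k x \<le> c \<longleftrightarrow> k \<le> card {i\<in>T. x i \<le> c}"
proof -
  let ?xs = "map x (sorted_list_of_set T)"
  have len: "length (sort ?xs) = card T" by simp
  have "length (filter (\<lambda>v. v \<le> c) (sort ?xs)) = length (filter (\<lambda>v. v \<le> c) ?xs)"
    by (metis mset_filter mset_sort size_mset)
  also have "\<dots> = length (filter (\<lambda>i. x i \<le> c) (sorted_list_of_set T))"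
    by (simp add: filter_map comp_def)
  also have "\<dots> = card {i\<in>T. x i \<le> c}"
    using assms(1) by (subst distinct_length_filter) (auto intro: arg_cong[where f=card])
  finally have eq: "length (filter (\<lambda>v. v \<le> c) (sort ?xs)) = card {i\<in>T. x i \<le> c}" .
  show ?thesis unfolding order_stat_def
    using sorted_nth_le_iff_count[of "sort ?xs" k c] assms len eq by simp
qed

lemma order_stat_mono:
  assumes "finite T" "1 \<le> k" "k \<le> card T" "\<And>i. i \<in> T \<Longrightarrow> x i \<le> y i"
  shows "order_stat T k x \<le> order_stat T k y"
proof -
  have "k \<le> card {i\<in>T. y i \<le> order_stat T k y}"
    using order_stat_le_iff[OF assms(1-3)] by blast
  also have "\<dots> \<le> card {i\<in>T. x i \<le> order_stat T k y}"
    using assms by (intro card_mono) force+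
  finally show ?thesis using order_stat_le_iff[OF assms(1-3)] by blast
qed

lemma order_stat_event:
  assumes "finite T" "1 \<le> k" "k \<le> card T" "j \<in> T" "S \<subseteq> T - {j}" "card S = k - 1"
    "\<And>i. i \<in> S \<Longrightarrow> x i < x j" "\<And>i. i \<in> T - {j} - S \<Longrightarrow> x j < x i"
  shows "order_stat T k x = x j"
proof -
  have fS: "finite S" using assms finite_subset by blast
  have eq: "{i\<in>T. x i \<le> x j} = insert j S"
    using assms by force
  have "k \<le> card {i\<in>T. x i \<le> x j}" unfolding eq using assms fS
    by (subst card_insert_disjoint) auto
  then have le: "order_stat T k x \<le> x j" using order_stat_le_iff[OF assms(1-3)] by blast
  have "\<not> order_stat T k x < x j"
  proof
    assume lt: "order_stat T k x < x j"
    have "{i\<in>T. x i \<le> order_stat T k x} \<subseteq> S" using assms lt by force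
    then have "card {i\<in>T. x i \<le> order_stat T k x} \<le> k - 1"
      using fS assms(6) card_mono by metis
    moreover have "k \<le> card {i\<in>T. x i \<le> order_stat T k x}"
      using order_stat_le_iff[OF assms(1-3)] by blast
    ultimately show False using assms(2) by linarith
  qed
  then show ?thesis using le by linarith
qed

lemma order_stat_measurable[measurable]:
  assumes "finite T" "1 \<le> k" "k \<le> card T" "\<And>i. i \<in> T \<Longrightarrow> (\<lambda>\<omega>. F \<omega> i) \<in> borel_measurable N"
  shows "(\<lambda>\<omega>. order_stat T k (F \<omega>)) \<in> borel_measurable N"
proof (rule borel_measurableI_le)
  fix c
  have "{\<omega> \<in> space N. order_stat T k (F \<omega>) \<le> c}
      = {\<omega> \<in> space N. real k \<le> (\<Sum>i\<in>T. indicator {..c} (F \<omega> i))}"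
  proof -
    have "\<And>\<omega>. (\<Sum>i\<in>T. indicator {..c} (F \<omega> i) :: real) = real (card {i\<in>T. F \<omega> i \<le> c})"
      using assms(1) by (simp add: indicator_def sum.If_cases) (auto intro!: arg_cong[where f=card])
    then show ?thesis using order_stat_le_iff[OF assms(1-3)] by auto
  qed
  also have "\<dots> \<in> sets N"
    using assms by measurable
  finally show "{\<omega> \<in> space N. order_stat T k (F \<omega>) \<le> c} \<in> sets N" .
qed

lemma od_below:
  fixes \<mu> :: "real measure" and u :: "real \<Rightarrow> ennreal"
  assumes sb[measurable_cong]: "sets \<mu> = sets borel" and um[measurable]: "u \<in> borel_measurable borel"
    and mu: "mono u" and tt: "t \<le> t'"
  shows "(\<integral>\<^sup>+y. u y * indicator {..<t} y \<partial>\<mu>) * (\<integral>\<^sup>+y. indicator {..<t'} y \<partial>\<mu>)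
       \<le> (\<integral>\<^sup>+y. u y * indicator {..<t'} y \<partial>\<mu>) * (\<integral>\<^sup>+y. indicator {..<t} y \<partial>\<mu>)"
proof -
  define A where "A = (\<integral>\<^sup>+y. u y * indicator {..<t} y \<partial>\<mu>)"
  define B where "B = (\<integral>\<^sup>+y. u y * indicator {t..<t'} y \<partial>\<mu>)"
  define e1 where "e1 = emeasure \<mu> {..<t}"
  define e2 where "e2 = emeasure \<mu> {t..<t'}"
  have i1: "(\<integral>\<^sup>+y. indicator {..<t} y \<partial>\<mu>) = e1" unfolding e1_def
    by (subst nn_integral_indicator) (auto simp: sb)
  have eqs: "{..<t'} = {..<t} \<union> {t..<t'}" using tt by auto
  have i2: "(\<integral>\<^sup>+y. indicator {..<t'} y \<partial>\<mu>) = e1 + e2" unfolding eqs e1_def e2_def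
    by (subst nn_integral_indicator, simp add: sb, subst plus_emeasure) (auto simp: sb)
  have "(\<integral>\<^sup>+y. u y * indicator {..<t'} y \<partial>\<mu>) = (\<integral>\<^sup>+y. u y * indicator {..<t} y + u y * indicator {t..<t'} y \<partial>\<mu>)"
    using tt by (intro nn_integral_cong) (auto simp: indicator_def)
  also have "\<dots> = A + B" unfolding A_def B_def by (subst nn_integral_add) auto
  finally have i3: "(\<integral>\<^sup>+y. u y * indicator {..<t'} y \<partial>\<mu>) = A + B" .
  have A: "A \<le> u t * e1"
  proof -
    have "A \<le> (\<integral>\<^sup>+y. u t * indicator {..<t} y \<partial>\<mu>)" unfolding A_def
      using mu by (intro nn_integral_mono) (auto simp: indicator_def mono_def intro: mult_right_mono)
    also have "\<dots> = u t * e1" unfolding e1_def by (subst nn_integral_cmult_indicator) (auto simp: sb)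
    finally show ?thesis .
  qed
  have B: "u t * e2 \<le> B"
  proof -
    have "u t * e2 = (\<integral>\<^sup>+y. u t * indicator {t..<t'} y \<partial>\<mu>)" unfolding e2_def by (subst nn_integral_cmult_indicator) (auto simp: sb)
    also have "\<dots> \<le> B" unfolding B_def
      using mu by (intro nn_integral_mono) (auto simp: indicator_def mono_def intro: mult_right_mono)
    finally show ?thesis .
  qed
  have "A * (e1 + e2) = A * e1 + A * e2" by (simp add: distrib_left)
  also have "\<dots> \<le> A * e1 + (u t * e1) * e2" using A by (intro add_mono mult_right_mono) auto
  also have "(u t * e1) * e2 = (u t * e2) * e1" by (simp add: mult_ac)
  also have "A * e1 + \<dots> \<le> A * e1 + B * e1" using B by (intro add_mono mult_right_mono) auto
  also have "\<dots> = (A + B) * e1" by (simp add: distrib_right)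
  finally show ?thesis unfolding i1 i2 i3 A_def .
qed

lemma od_above:
  fixes \<mu> :: "real measure" and u :: "real \<Rightarrow> ennreal"
  assumes sb[measurable_cong]: "sets \<mu> = sets borel" and um[measurable]: "u \<in> borel_measurable borel"
    and mu: "mono u" and tt: "t \<le> t'"
  shows "(\<integral>\<^sup>+y. u y * indicator {t<..} y \<partial>\<mu>) * (\<integral>\<^sup>+y. indicator {t'<..} y \<partial>\<mu>)
       \<le> (\<integral>\<^sup>+y. u y * indicator {t'<..} y \<partial>\<mu>) * (\<integral>\<^sup>+y. indicator {t<..} y \<partial>\<mu>)"
proof -
  define A where "A = (\<integral>\<^sup>+y. u y * indicator {t<..t'} y \<partial>\<mu>)"
  define B where "B = (\<integral>\<^sup>+y. u y * indicator {t'<..} y \<partial>\<mu>)"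
  define e1 where "e1 = emeasure \<mu> {t<..t'}"
  define e2 where "e2 = emeasure \<mu> {t'<..}"
  have i1: "(\<integral>\<^sup>+y. indicator {t'<..} y \<partial>\<mu>) = e2" unfolding e2_def
    by (subst nn_integral_indicator) (auto simp: sb)
  have eqs: "{t<..} = {t<..t'} \<union> {t'<..}" using tt by auto
  have i2: "(\<integral>\<^sup>+y. indicator {t<..} y \<partial>\<mu>) = e1 + e2" unfolding eqs e1_def e2_def
    by (subst nn_integral_indicator, simp add: sb, subst plus_emeasure) (auto simp: sb)
  have "(\<integral>\<^sup>+y. u y * indicator {t<..} y \<partial>\<mu>) = (\<integral>\<^sup>+y. u y * indicator {t<..t'} y + u y * indicator {t'<..} y \<partial>\<mu>)"
    using tt by (intro nn_integral_cong) (auto simp: indicator_def)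
  also have "\<dots> = A + B" unfolding A_def B_def by (subst nn_integral_add) auto
  finally have i3: "(\<integral>\<^sup>+y. u y * indicator {t<..} y \<partial>\<mu>) = A + B" .
  have A: "A \<le> u t' * e1"
  proof -
    have "A \<le> (\<integral>\<^sup>+y. u t' * indicator {t<..t'} y \<partial>\<mu>)" unfolding A_def
      using mu by (intro nn_integral_mono) (auto simp: indicator_def mono_def intro: mult_right_mono)
    also have "\<dots> = u t' * e1" unfolding e1_def by (subst nn_integral_cmult_indicator) (auto simp: sb)
    finally show ?thesis .
  qed
  have B: "u t' * e2 \<le> B"
  proof -
    have "u t' * e2 = (\<integral>\<^sup>+y. u t' * indicator {t'<..} y \<partial>\<mu>)" unfolding e2_def by (subst nn_integral_cmult_indicator) (auto simp: sb)
    also have "\<dots> \<le> B" unfolding B_def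
      using mu by (intro nn_integral_mono) (auto simp: indicator_def mono_def intro: mult_right_mono)
    finally show ?thesis .
  qed
  have "(A + B) * e2 = A * e2 + B * e2" by (simp add: distrib_right)
  also have "\<dots> \<le> (u t' * e1) * e2 + B * e2" using A by (intro add_mono mult_right_mono) auto
  also have "(u t' * e1) * e2 = (u t' * e2) * e1" by (simp add: mult_ac)
  also have "\<dots> + B * e2 \<le> B * e1 + B * e2" using B by (intro add_mono mult_right_mono) auto
  also have "\<dots> = B * (e1 + e2)" by (simp add: distrib_left)
  finally show ?thesis unfolding i1 i2 i3 B_def .
qed

definition mono_on_space :: "nat set \<Rightarrow> ((nat \<Rightarrow> real) \<Rightarrow> ennreal) \<Rightarrow> bool" where
  "mono_on_space J u \<longleftrightarrow> (\<forall>x\<in>extensional J. \<forall>y\<in>extensional J. (\<forall>i\<in>J. x i \<le> y i) \<longrightarrow> u x \<le> u y)"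

lemma dom_prod:
  fixes \<mu> :: "real measure" and w :: "nat \<Rightarrow> real \<Rightarrow> real \<Rightarrow> ennreal"
  assumes ps: "prob_space \<mu>" and sb[measurable_cong]: "sets \<mu> = sets borel"
    and wm[measurable]: "\<And>i s. w i s \<in> borel_measurable borel"
    and od: "\<And>i u. i \<in> J \<Longrightarrow> u \<in> borel_measurable borel \<Longrightarrow> mono u \<Longrightarrow>
        (\<integral>\<^sup>+y. u y * w i t y \<partial>\<mu>) * (\<integral>\<^sup>+y. w i t' y \<partial>\<mu>) \<le> (\<integral>\<^sup>+y. u y * w i t' y \<partial>\<mu>) * (\<integral>\<^sup>+y. w i t y \<partial>\<mu>)"
    and fin: "finite J"
  shows "u \<in> borel_measurable (PiM J (\<lambda>_. \<mu>)) \<Longrightarrow> mono_on_space J u \<Longrightarrow>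
    (\<integral>\<^sup>+x. u x * (\<Prod>i\<in>J. w i t (x i)) \<partial>PiM J (\<lambda>_. \<mu>)) * (\<Prod>i\<in>J. \<integral>\<^sup>+y. w i t' y \<partial>\<mu>)
    \<le> (\<integral>\<^sup>+x. u x * (\<Prod>i\<in>J. w i t' (x i)) \<partial>PiM J (\<lambda>_. \<mu>)) * (\<Prod>i\<in>J. \<integral>\<^sup>+y. w i t y \<partial>\<mu>)"
  using fin od
proof (induction J arbitrary: u rule: finite_induct)
  case empty
  then show ?case by simp
next
  case (insert i J)
  interpret prob_space \<mu> by fact
  interpret product_sigma_finite "\<lambda>_. \<mu>"
    unfolding product_sigma_finite_def using sigma_finite_measure_axioms by auto
  note um[measurable] = insert.prems(1)
  define v where "v s x = (\<integral>\<^sup>+y. u (x(i := y)) * w i s y \<partial>\<mu>)" for s x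
  have vm[measurable]: "v s \<in> borel_measurable (PiM J (\<lambda>_. \<mu>))" for s
    unfolding v_def by measurable
  have vmono: "mono_on_space J (v s)" for s
    unfolding mono_on_space_def v_def
  proof (intro ballI impI nn_integral_mono)
    fix x y :: "nat \<Rightarrow> real" and z :: real assume x: "x \<in> extensional J" and y: "y \<in> extensional J" and le: "\<forall>i\<in>J. x i \<le> y i"
    have "u (x(i := z)) \<le> u (y(i := z))"
      using insert.prems(2) x y le unfolding mono_on_space_def
      by (auto simp: extensional_def)
    then show "u (x(i := z)) * w i s z \<le> u (y(i := z)) * w i s z" by (rule mult_right_mono) auto
  qed
  define c where "c s = (\<integral>\<^sup>+y. w i s y \<partial>\<mu>)" for s
  have split: "(\<integral>\<^sup>+x. u x * (\<Prod>j\<in>insert i J. w j s (x j)) \<partial>PiM (insert i J) (\<lambda>_. \<mu>))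
     = (\<integral>\<^sup>+x. v s x * (\<Prod>j\<in>J. w j s (x j)) \<partial>PiM J (\<lambda>_. \<mu>))" for s
  proof -
    have "(\<integral>\<^sup>+x. u x * (\<Prod>j\<in>insert i J. w j s (x j)) \<partial>PiM (insert i J) (\<lambda>_. \<mu>))
      = (\<integral>\<^sup>+x. (\<integral>\<^sup>+y. u (x(i := y)) * (\<Prod>j\<in>insert i J. w j s ((x(i := y)) j)) \<partial>\<mu>) \<partial>PiM J (\<lambda>_. \<mu>))"
      using insert by (subst product_nn_integral_insert) auto
    also have "\<dots> = (\<integral>\<^sup>+x. (\<integral>\<^sup>+y. (u (x(i := y)) * w i s y) * (\<Prod>j\<in>J. w j s (x j)) \<partial>\<mu>) \<partial>PiM J (\<lambda>_. \<mu>))"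
    proof (intro nn_integral_cong)
      fix x y
      have "(\<Prod>j\<in>insert i J. w j s ((x(i := y)) j)) = w i s y * (\<Prod>j\<in>J. w j s ((x(i := y)) j))"
        using insert by simp
      also have "(\<Prod>j\<in>J. w j s ((x(i := y)) j)) = (\<Prod>j\<in>J. w j s (x j))"
        using insert by (intro prod.cong) auto
      finally show "u (x(i := y)) * (\<Prod>j\<in>insert i J. w j s ((x(i := y)) j)) = (u (x(i := y)) * w i s y) * (\<Prod>j\<in>J. w j s (x j))"
        by (simp add: mult_ac)
    qed
    also have "\<dots> = (\<integral>\<^sup>+x. v s x * (\<Prod>j\<in>J. w j s (x j)) \<partial>PiM J (\<lambda>_. \<mu>))"
      unfolding v_def by (intro nn_integral_cong, subst nn_integral_multc) auto
    finally show ?thesis .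
  qed
  have prodc: "(\<Prod>j\<in>insert i J. \<integral>\<^sup>+y. w j s y \<partial>\<mu>) = c s * (\<Prod>j\<in>J. \<integral>\<^sup>+y. w j s y \<partial>\<mu>)" for s
    unfolding c_def using insert by simp
  have one: "v t x * c t' \<le> v t' x * c t" if "x \<in> space (PiM J (\<lambda>_. \<mu>))" for x
  proof -
    have xm: "(\<lambda>y. u (x(i := y))) \<in> borel_measurable borel"
      using measurable_comp[OF measurable_component_update[OF that insert.hyps(2)] um]
      by (simp add: comp_def measurable_cong_sets[OF sb[symmetric] refl])
    have mono: "mono (\<lambda>y. u (x(i := y)))"
      using insert.prems(2) that unfolding mono_on_space_def mono_def
      by (auto simp: space_PiM PiE_def extensional_def)
    show ?thesis unfolding v_def c_def
      by (rule insert.prems(3)[OF _ xm mono]) simp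
  qed
  have "(\<integral>\<^sup>+x. v t x * (\<Prod>j\<in>J. w j t (x j)) \<partial>PiM J (\<lambda>_. \<mu>)) * c t'
      = (\<integral>\<^sup>+x. (v t x * c t') * (\<Prod>j\<in>J. w j t (x j)) \<partial>PiM J (\<lambda>_. \<mu>))"
    by (subst nn_integral_multc[symmetric]) (auto simp: mult_ac)
  also have "\<dots> \<le> (\<integral>\<^sup>+x. (v t' x * c t) * (\<Prod>j\<in>J. w j t (x j)) \<partial>PiM J (\<lambda>_. \<mu>))"
    using one by (intro nn_integral_mono) (auto intro: mult_right_mono)
  also have "\<dots> = (\<integral>\<^sup>+x. v t' x * (\<Prod>j\<in>J. w j t (x j)) \<partial>PiM J (\<lambda>_. \<mu>)) * c t"
    by (subst nn_integral_multc[symmetric]) (auto simp: mult_ac)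
  finally have st1: "(\<integral>\<^sup>+x. v t x * (\<Prod>j\<in>J. w j t (x j)) \<partial>PiM J (\<lambda>_. \<mu>)) * c t'
      \<le> (\<integral>\<^sup>+x. v t' x * (\<Prod>j\<in>J. w j t (x j)) \<partial>PiM J (\<lambda>_. \<mu>)) * c t" .
  have IH: "(\<integral>\<^sup>+x. v t' x * (\<Prod>j\<in>J. w j t (x j)) \<partial>PiM J (\<lambda>_. \<mu>)) * (\<Prod>j\<in>J. \<integral>\<^sup>+y. w j t' y \<partial>\<mu>)
     \<le> (\<integral>\<^sup>+x. v t' x * (\<Prod>j\<in>J. w j t' (x j)) \<partial>PiM J (\<lambda>_. \<mu>)) * (\<Prod>j\<in>J. \<integral>\<^sup>+y. w j t y \<partial>\<mu>)"
    using insert.IH[OF vm vmono] insert.prems(3) by auto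
  show ?case unfolding split prodc
  proof -
    let ?A = "(\<integral>\<^sup>+x. v t x * (\<Prod>j\<in>J. w j t (x j)) \<partial>PiM J (\<lambda>_. \<mu>))"
    let ?B = "(\<integral>\<^sup>+x. v t' x * (\<Prod>j\<in>J. w j t (x j)) \<partial>PiM J (\<lambda>_. \<mu>))"
    let ?C = "(\<integral>\<^sup>+x. v t' x * (\<Prod>j\<in>J. w j t' (x j)) \<partial>PiM J (\<lambda>_. \<mu>))"
    let ?p = "(\<Prod>j\<in>J. \<integral>\<^sup>+y. w j t y \<partial>\<mu>)" and ?p' = "(\<Prod>j\<in>J. \<integral>\<^sup>+y. w j t' y \<partial>\<mu>)"
    have "?A * (c t' * ?p') = (?A * c t') * ?p'" by (simp add: mult_ac)
    also have "\<dots> \<le> (?B * c t) * ?p'" using st1 by (rule mult_right_mono) auto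
    also have "\<dots> = (?B * ?p') * c t" by (simp add: mult_ac)
    also have "\<dots> \<le> (?C * ?p) * c t" using IH by (rule mult_right_mono) auto
    also have "\<dots> = ?C * (c t * ?p)" by (simp add: mult_ac)
    finally show "?A * (c t' * ?p') \<le> ?C * (c t * ?p)" .
  qed
qed

locale os_setup =
  fixes \<mu> :: "real measure" and I T :: "nat set" and k :: nat
  assumes ps: "prob_space \<mu>" and sb[measurable_cong]: "sets \<mu> = sets borel"
    and cont: "\<And>x. emeasure \<mu> {x} = 0"
    and finI: "finite I" and TI: "T \<subseteq> I" and k1: "1 \<le> k" and kT: "k \<le> card T"
begin

abbreviation "P \<equiv> PiM I (\<lambda>_. \<mu>)"
abbreviation "Z \<equiv> order_stat T k"

definition Sub :: "nat \<Rightarrow> nat set set" where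
  "Sub j = {S. S \<subseteq> T - {j} \<and> card S = k - 1}"

definition E :: "nat \<Rightarrow> nat set \<Rightarrow> (nat \<Rightarrow> real) set" where
  "E j S = {x. (\<forall>i\<in>S. x i < x j) \<and> (\<forall>i\<in>T - {j} - S. x j < x i)}"

lemma finT: "finite T" using finI TI finite_subset by blast

lemma finSub: "finite (Sub j)"
proof -
  have "Sub j \<subseteq> Pow T" unfolding Sub_def by auto
  then show ?thesis using finT finite_subset by blast
qed

lemma P_prob: "prob_space P"
  using ps by (intro prob_space_PiM) auto

lemma psf: "product_sigma_finite (\<lambda>_. \<mu>)"
  unfolding product_sigma_finite_def using ps prob_space_imp_sigma_finite by auto

lemma Z_meas[measurable]: "Z \<in> borel_measurable P"
  using finT k1 kT TI by (intro order_stat_measurable[where F="\<lambda>x. x"]) auto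

lemma ties_null:
  assumes "i \<in> I" "j \<in> I" "i \<noteq> j"
  shows "AE x in P. x i \<noteq> x j"
proof -
  interpret product_sigma_finite "\<lambda>_. \<mu>" by (rule psf)
  have Ieq: "I = insert j (I - {j})" using assms by auto
  have [simp]: "i \<in> I" "j \<in> I" using assms by auto
  have m: "{x \<in> space P. x i = x j} \<in> sets P" by measurable
  have "emeasure P {x \<in> space P. x i = x j} = (\<integral>\<^sup>+x. indicator {x \<in> space P. x i = x j} x \<partial>P)"
    using m by simp
  also have "\<dots> = (\<integral>\<^sup>+x. indicator {x. x i = x j} x \<partial>P)"
    by (intro nn_integral_cong) (auto simp: indicator_def)
  also have "\<dots> = (\<integral>\<^sup>+x. indicator {x. x i = x j} x \<partial>PiM (insert j (I - {j})) (\<lambda>_. \<mu>))"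
    using Ieq by simp
  also have "\<dots> = (\<integral>\<^sup>+x. (\<integral>\<^sup>+y. indicator {x. x i = x j} (x(j := y)) \<partial>\<mu>) \<partial>PiM (I - {j}) (\<lambda>_. \<mu>))"
  proof -
    have eq: "(\<lambda>x. if x i = x j then 1 else 0::ennreal) = indicator {x. x i = x j}"
      by (auto simp: indicator_def)
    have [measurable]: "Measurable.pred P (\<lambda>x. x i = x j)" using m by (simp add: pred_def)
    have mi0: "indicator {x. x i = x j} \<in> borel_measurable P" unfolding eq[symmetric] by measurable
    have mi: "indicator {x. x i = x j} \<in> borel_measurable (PiM (insert j (I - {j})) (\<lambda>_. \<mu>))"
      using mi0 by (simp only: Ieq[symmetric])
    show ?thesis using finI by (subst product_nn_integral_insert[OF _ _ mi]) auto
  qed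
  also have "\<dots> = (\<integral>\<^sup>+x. (\<integral>\<^sup>+y. indicator {x i} y \<partial>\<mu>) \<partial>PiM (I - {j}) (\<lambda>_. \<mu>))"
    using assms by (intro nn_integral_cong) (auto simp: indicator_def)
  also have "\<dots> = 0"
    using cont by (subst nn_integral_indicator) (auto simp: sb)
  finally have "emeasure P {x \<in> space P. x i = x j} = 0" .
  then show ?thesis by (subst AE_iff_measurable[OF m]) auto
qed

lemma AE_distinct: "AE x in P. \<forall>i\<in>T. \<forall>j\<in>T. i \<noteq> j \<longrightarrow> x i \<noteq> x j"
  using finT TI by (intro AE_finite_allI) (auto intro!: AE_finite_allI ties_null simp: AE_impI)

lemma E_Z:
  assumes "j \<in> T" "S \<in> Sub j" "x \<in> E j S"
  shows "Z x = x j"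
  using assms finT k1 kT unfolding Sub_def E_def
  by (intro order_stat_event[where S=S]) auto

lemma Z_in:
  "\<exists>j\<in>T. Z x = x j"
proof -
  let ?xs = "map x (sorted_list_of_set T)"
  have "Z x \<in> set (sort ?xs)" unfolding order_stat_def using k1 kT finT
    by (intro nth_mem) auto
  then have "Z x \<in> set ?xs" by simp
  then show ?thesis using finT by auto
qed

lemma partition:
  assumes dist: "\<forall>i\<in>T. \<forall>j\<in>T. i \<noteq> j \<longrightarrow> x i \<noteq> x j"
  shows "(\<Sum>j\<in>T. \<Sum>S\<in>Sub j. indicator (E j S) x) = (1::ennreal)"
proof -
  obtain j0 where j0: "j0 \<in> T" "Z x = x j0" using Z_in by blast
  define S0 where "S0 = {i\<in>T. x i < x j0}"
  have fS0: "finite S0" using finT unfolding S0_def by auto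
  have S0sub: "S0 \<subseteq> T - {j0}" unfolding S0_def by auto
  have c1: "k \<le> card S0 + 1"
  proof -
    have "k \<le> card {i\<in>T. x i \<le> Z x}" using order_stat_le_iff[OF finT k1 kT] by blast
    also have "{i\<in>T. x i \<le> Z x} = insert j0 S0"
    proof (intro equalityI subsetI)
      fix i assume "i \<in> {i\<in>T. x i \<le> Z x}"
      then have i: "i \<in> T" "x i \<le> x j0" using j0 by auto
      show "i \<in> insert j0 S0"
      proof (cases "i = j0")
        case False
        then have "x i \<noteq> x j0" using dist i(1) j0(1) by blast
        then show ?thesis using i unfolding S0_def by auto
      qed simp
    next
      fix i assume "i \<in> insert j0 S0"
      then show "i \<in> {i\<in>T. x i \<le> Z x}" using j0 unfolding S0_def by auto
    qed
    also have "card \<dots> \<le> card S0 + 1" using fS0 by (simp add: card_insert_le_m1 card_insert_if)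
    finally show ?thesis .
  qed
  have c2: "card S0 < k"
  proof (cases "S0 = {}")
    case True then show ?thesis using k1 by simp
  next
    case False
    define c where "c = Max (x ` S0)"
    have cS: "c < x j0" unfolding c_def using False fS0 S0_def by (subst Max_less_iff) auto
    have "{i\<in>T. x i \<le> c} = S0"
    proof
      show "{i\<in>T. x i \<le> c} \<subseteq> S0" using cS unfolding S0_def by auto
      show "S0 \<subseteq> {i\<in>T. x i \<le> c}" unfolding c_def using fS0 S0sub by (auto intro: Max_ge)
    qed
    moreover have "\<not> Z x \<le> c" using cS j0 by auto
    ultimately show ?thesis using order_stat_le_iff[OF finT k1 kT, of x c] by auto
  qed
  have S0Sub: "S0 \<in> Sub j0" unfolding Sub_def using S0sub c1 c2 by auto
  have xE: "x \<in> E j0 S0" unfolding E_def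
  proof (intro CollectI conjI ballI)
    fix i assume "i \<in> T - {j0} - S0"
    then have "i \<in> T" "i \<noteq> j0" "\<not> x i < x j0" unfolding S0_def by auto
    moreover have "x i \<noteq> x j0" using dist \<open>i \<in> T\<close> \<open>i \<noteq> j0\<close> j0(1) by blast
    ultimately show "x j0 < x i" by auto
  qed (auto simp: S0_def)
  have uniq: "j = j0 \<and> S = S0" if "j \<in> T" "S \<in> Sub j" "x \<in> E j S" for j S
  proof -
    have "Z x = x j" using E_Z that by blast
    then have "j = j0" using j0 dist that(1) by fastforce
    moreover have "S = S0"
    proof
      show "S \<subseteq> S0"
      proof
        fix i assume i: "i \<in> S"
        then have "i \<in> T" using that(2) unfolding Sub_def by blast
        moreover have "x i < x j" using i that(3) unfolding E_def by blast
        ultimately show "i \<in> S0" using \<open>j = j0\<close> unfolding S0_def by blast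
      qed
      show "S0 \<subseteq> S"
      proof
        fix i assume "i \<in> S0"
        then have "i \<in> T" "x i < x j" using \<open>j = j0\<close> unfolding S0_def by auto
        moreover have "i \<noteq> j" using \<open>x i < x j\<close> by auto
        ultimately show "i \<in> S"
        proof (rule_tac ccontr)
          assume "i \<in> T" "x i < x j" "i \<noteq> j" "i \<notin> S"
          then have "x j < x i" using that(3) unfolding E_def by auto
          then show False using \<open>x i < x j\<close> by auto
        qed
      qed
    qed
    ultimately show ?thesis by simp
  qed
  have "(\<Sum>j\<in>T. \<Sum>S\<in>Sub j. indicator (E j S) x) = (\<Sum>j\<in>T. if j = j0 then 1 else 0 :: ennreal)"
  proof (intro sum.cong refl)
    fix j assume j: "j \<in> T"
    show "(\<Sum>S\<in>Sub j. indicator (E j S) x) = (if j = j0 then 1 else 0 :: ennreal)"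
    proof (cases "j = j0")
      case True
      have "(\<Sum>S\<in>Sub j. indicator (E j S) x) = (\<Sum>S\<in>Sub j. if S = S0 then 1 else 0 :: ennreal)"
      proof (intro sum.cong refl)
        fix S assume S: "S \<in> Sub j"
        show "indicator (E j S) x = (if S = S0 then 1 else 0 :: ennreal)"
        proof (cases "S = S0")
          case True then show ?thesis using xE \<open>j = j0\<close> by simp
        next
          case False
          then have "x \<notin> E j S" using uniq[of j S] j S by blast
          then show ?thesis using False by simp
        qed
      qed
      also have "\<dots> = 1" using S0Sub True finSub by simp
      finally show ?thesis using True by simp
    next
      case False
      have "\<forall>S\<in>Sub j. indicator (E j S) x = (0::ennreal)"
      proof
        fix S assume S: "S \<in> Sub j"
        then have "x \<notin> E j S" using uniq[of j S] j False by blast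
        then show "indicator (E j S) x = (0::ennreal)" by simp
      qed
      then show ?thesis using False by (simp add: sum.neutral)
    qed
  qed
  also have "\<dots> = 1" using j0 finT by simp
  finally show ?thesis .
qed

end

lemma prod_if_01:
  assumes "finite A"
  shows "(\<Prod>i\<in>A. if Q i then 1 else 0 :: ennreal) = (if \<forall>i\<in>A. Q i then 1 else 0)"
  using assms by (induction A rule: finite_induct) auto

context os_setup
begin

definition w :: "nat \<Rightarrow> nat set \<Rightarrow> nat \<Rightarrow> real \<Rightarrow> real \<Rightarrow> ennreal" where
  "w j S i t y = (if i \<in> S then indicator {..<t} y else if i \<in> T then indicator {t<..} y else 1)"

definition W :: "nat \<Rightarrow> nat set \<Rightarrow> real \<Rightarrow> (nat \<Rightarrow> real) \<Rightarrow> ennreal" where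
  "W j S t x = (\<Prod>i\<in>I - {j}. w j S i t (x i))"

definition psi :: "((nat \<Rightarrow> real) \<Rightarrow> ennreal) \<Rightarrow> nat \<Rightarrow> nat set \<Rightarrow> real \<Rightarrow> ennreal" where
  "psi \<Phi> j S t = (\<integral>\<^sup>+x. \<Phi> (x(j := t)) * W j S t x \<partial>PiM (I - {j}) (\<lambda>_. \<mu>))"

lemma w_if: "w j S i t y = (if (i \<in> S \<longrightarrow> y < t) \<and> (i \<notin> S \<and> i \<in> T \<longrightarrow> t < y) then 1 else 0)"
  unfolding w_def by (auto simp: indicator_def)

lemma W_if: "W j S t x = (if (\<forall>i\<in>I - {j}. (i \<in> S \<longrightarrow> x i < t) \<and> (i \<notin> S \<and> i \<in> T \<longrightarrow> t < x i)) then 1 else 0)"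
  unfolding W_def w_if using finI by (subst prod_if_01) auto

lemma ind_E:
  assumes "j \<in> T" "S \<in> Sub j"
  shows "indicator (E j S) (x(j := t)) = W j S t x"
proof -
  have "x(j := t) \<in> E j S \<longleftrightarrow> (\<forall>i\<in>I - {j}. (i \<in> S \<longrightarrow> x i < t) \<and> (i \<notin> S \<and> i \<in> T \<longrightarrow> t < x i))"
    using assms TI unfolding E_def Sub_def by auto
  then show ?thesis unfolding W_if by (simp add: indicator_def)
qed

lemma E_meas:
  assumes "j \<in> T" "S \<in> Sub j" and that: "T \<subseteq> J"
  shows "indicator (E j S) \<in> borel_measurable (PiM J (\<lambda>_. \<mu>))"
proof -
  have "S \<subseteq> J" "j \<in> J" using assms that unfolding Sub_def by auto
  have eq: "indicator (E j S) = (\<lambda>x. if (\<forall>i\<in>S. x i < x j) \<and> (\<forall>i\<in>T - {j} - S. x j < x i) then 1 else 0 :: ennreal)"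
    unfolding E_def by (auto simp: indicator_def)
  have [measurable]: "Measurable.pred (PiM J (\<lambda>_. \<mu>)) (\<lambda>x. \<forall>i\<in>S. x i < x j)"
    using \<open>S \<subseteq> J\<close> \<open>j \<in> J\<close> by (intro pred_intros_countable_bounded) auto
  have [measurable]: "Measurable.pred (PiM J (\<lambda>_. \<mu>)) (\<lambda>x. \<forall>i\<in>T - {j} - S. x j < x i)"
    using that \<open>j \<in> J\<close> by (intro pred_intros_countable_bounded) auto
  have [measurable]: "Measurable.pred (PiM J (\<lambda>_. \<mu>)) (\<lambda>x. x \<in> E j S)"
    unfolding E_def mem_Collect_eq by measurable
  show ?thesis by measurable
qed

end

context os_setup
begin

lemma W_meas:
  "(\<lambda>(t, x). W j S t x) \<in> borel_measurable (borel \<Otimes>\<^sub>M PiM (I - {j}) (\<lambda>_. \<mu>))"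
proof -
  have eq: "(\<lambda>(t, x). W j S t x) = (\<lambda>p. \<Prod>i\<in>I - {j}. w j S i (fst p) (snd p i))"
    unfolding W_def by auto
  show ?thesis unfolding eq w_if by measurable
qed

lemma upd_meas:
  "(\<lambda>p. (snd p)(j := fst p)) \<in> measurable (borel \<Otimes>\<^sub>M PiM (I - {j}) (\<lambda>_. \<mu>)) (PiM (insert j (I - {j})) (\<lambda>_. \<mu>))"
proof -
  have "(\<lambda>p. (snd p, fst p)) \<in> measurable (borel \<Otimes>\<^sub>M PiM (I - {j}) (\<lambda>_. \<mu>)) (PiM (I - {j}) (\<lambda>_. \<mu>) \<Otimes>\<^sub>M \<mu>)"
    by (intro measurable_Pair) (auto simp: measurable_cong_sets[OF refl sb])
  from measurable_comp[OF this measurable_add_dim[of j "I - {j}" "\<lambda>_. \<mu>"]] show ?thesis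
    by (simp add: comp_def)
qed

lemma psi_meas:
  assumes j: "j \<in> I" and [measurable]: "\<Phi> \<in> borel_measurable P"
  shows "psi \<Phi> j S \<in> borel_measurable borel"
proof -
  interpret sigma_finite_measure "PiM (I - {j}) (\<lambda>_. \<mu>)"
    using ps finI by (intro prob_space_imp_sigma_finite prob_space_PiM) (auto simp: prob_space_PiM)
  have Ieq: "insert j (I - {j}) = I" using j by auto
  have um[measurable]: "(\<lambda>p. (snd p)(j := fst p)) \<in> measurable (borel \<Otimes>\<^sub>M PiM (I - {j}) (\<lambda>_. \<mu>)) P"
    using upd_meas[of j] unfolding Ieq .
  have [measurable]: "(\<lambda>p. \<Phi> ((snd p)(j := fst p))) \<in> borel_measurable (borel \<Otimes>\<^sub>M PiM (I - {j}) (\<lambda>_. \<mu>))"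
    by measurable
  have "(\<lambda>(t, x). \<Phi> (x(j := t)) * W j S t x) \<in> borel_measurable (borel \<Otimes>\<^sub>M PiM (I - {j}) (\<lambda>_. \<mu>))"
  proof -
    have eq: "(\<lambda>(t, x). \<Phi> (x(j := t)) * W j S t x) = (\<lambda>p. \<Phi> ((snd p)(j := fst p)) * (\<lambda>(t, x). W j S t x) p)"
      by auto
    show ?thesis unfolding eq using W_meas by measurable
  qed
  then show ?thesis unfolding psi_def[abs_def] by (rule borel_measurable_nn_integral)
qed

end

context os_setup
begin

lemma dec:
  assumes [measurable]: "\<Phi> \<in> borel_measurable P" "G \<in> borel_measurable borel"
  shows "(\<integral>\<^sup>+x. \<Phi> x * G (Z x) \<partial>P) = (\<Sum>j\<in>T. \<Sum>S\<in>Sub j. \<integral>\<^sup>+t. G t * psi \<Phi> j S t \<partial>\<mu>)"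
proof -
  interpret product_sigma_finite "\<lambda>_. \<mu>" by (rule psf)
  have Em[measurable]: "indicator (E j S) \<in> borel_measurable P" if "j \<in> T" "S \<in> Sub j" for j S
    using E_meas[OF that TI] .
  have Gm[measurable]: "G \<in> borel_measurable \<mu>" using measurable_cong_sets[OF sb refl] by simp
  have "(\<integral>\<^sup>+x. \<Phi> x * G (Z x) \<partial>P) = (\<integral>\<^sup>+x. \<Phi> x * G (Z x) * (\<Sum>j\<in>T. \<Sum>S\<in>Sub j. indicator (E j S) x) \<partial>P)"
    using AE_distinct by (intro nn_integral_cong_AE) (auto simp: partition)
  also have "\<dots> = (\<integral>\<^sup>+x. (\<Sum>j\<in>T. \<Sum>S\<in>Sub j. \<Phi> x * G (Z x) * indicator (E j S) x) \<partial>P)"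
    by (simp add: sum_distrib_left)
  also have "\<dots> = (\<Sum>j\<in>T. \<integral>\<^sup>+x. (\<Sum>S\<in>Sub j. \<Phi> x * G (Z x) * indicator (E j S) x) \<partial>P)"
    by (rule nn_integral_sum) measurable
  also have "\<dots> = (\<Sum>j\<in>T. \<Sum>S\<in>Sub j. \<integral>\<^sup>+x. \<Phi> x * G (Z x) * indicator (E j S) x \<partial>P)"
    by (intro sum.cong refl nn_integral_sum) measurable
  also have "\<dots> = (\<Sum>j\<in>T. \<Sum>S\<in>Sub j. \<integral>\<^sup>+t. G t * psi \<Phi> j S t \<partial>\<mu>)"
  proof (intro sum.cong refl)
    fix j S assume j: "j \<in> T" and S: "S \<in> Sub j"
    have jI: "j \<in> I" using j TI by auto
    have Ieq: "I = insert j (I - {j})" using jI by auto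
    have "(\<integral>\<^sup>+x. \<Phi> x * G (Z x) * indicator (E j S) x \<partial>P) = (\<integral>\<^sup>+x. \<Phi> x * G (x j) * indicator (E j S) x \<partial>P)"
      using E_Z[OF j S] by (intro nn_integral_cong) (auto simp: indicator_def)
    also have "\<dots> = (\<integral>\<^sup>+x. \<Phi> x * G (x j) * indicator (E j S) x \<partial>PiM (insert j (I - {j})) (\<lambda>_. \<mu>))"
      using Ieq by simp
    also have "\<dots> = (\<integral>\<^sup>+t. (\<integral>\<^sup>+x. \<Phi> (x(j := t)) * G t * indicator (E j S) (x(j := t)) \<partial>PiM (I - {j}) (\<lambda>_. \<mu>)) \<partial>\<mu>)"
    proof (subst product_nn_integral_insert_rev)
      have "(\<lambda>x. \<Phi> x * G (x j) * indicator (E j S) x) \<in> borel_measurable P"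
        using jI j S by measurable
      then show "(\<lambda>x. \<Phi> x * G (x j) * indicator (E j S) x) \<in> borel_measurable (PiM (insert j (I - {j})) (\<lambda>_. \<mu>))"
        using Ieq by simp
    qed (use finI in auto)
    also have "\<dots> = (\<integral>\<^sup>+t. G t * psi \<Phi> j S t \<partial>\<mu>)"
    proof (intro nn_integral_cong)
      fix t
      have "(\<integral>\<^sup>+x. \<Phi> (x(j := t)) * G t * indicator (E j S) (x(j := t)) \<partial>PiM (I - {j}) (\<lambda>_. \<mu>))
          = (\<integral>\<^sup>+x. G t * (\<Phi> (x(j := t)) * W j S t x) \<partial>PiM (I - {j}) (\<lambda>_. \<mu>))"
        using ind_E[OF j S] by (intro nn_integral_cong) (simp add: mult_ac)
      also have "\<dots> = G t * psi \<Phi> j S t" unfolding psi_def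
      proof (rule nn_integral_cmult)
        interpret sigma_finite_measure "PiM (I - {j}) (\<lambda>_. \<mu>)"
          using ps finI by (intro prob_space_imp_sigma_finite prob_space_PiM) (auto simp: prob_space_PiM)
        have Ieq': "insert j (I - {j}) = I" using jI by auto
        have um: "(\<lambda>p. (snd p)(j := fst p)) \<in> measurable (borel \<Otimes>\<^sub>M PiM (I - {j}) (\<lambda>_. \<mu>)) P"
          using upd_meas[of j] unfolding Ieq' .
        have "(\<lambda>x. x(j := t)) \<in> measurable (PiM (I - {j}) (\<lambda>_. \<mu>)) P"
          using measurable_Pair2[OF um, of t] by simp
        then have "(\<lambda>x. \<Phi> (x(j := t))) \<in> borel_measurable (PiM (I - {j}) (\<lambda>_. \<mu>))" by measurable
        moreover have "(\<lambda>x. W j S t x) \<in> borel_measurable (PiM (I - {j}) (\<lambda>_. \<mu>))"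
          using measurable_Pair2[OF W_meas, of t] by simp
        ultimately show "(\<lambda>x. \<Phi> (x(j := t)) * W j S t x) \<in> borel_measurable (PiM (I - {j}) (\<lambda>_. \<mu>))"
          by measurable
      qed
      finally show "(\<integral>\<^sup>+x. \<Phi> (x(j := t)) * G t * indicator (E j S) (x(j := t)) \<partial>PiM (I - {j}) (\<lambda>_. \<mu>)) = G t * psi \<Phi> j S t" .
    qed
    finally show "(\<integral>\<^sup>+x. \<Phi> x * G (Z x) * indicator (E j S) x \<partial>P) = (\<integral>\<^sup>+t. G t * psi \<Phi> j S t \<partial>\<mu>)" .
  qed
  finally show ?thesis .
qed

end

context os_setup
begin

definition pk :: "real \<Rightarrow> ennreal" where
  "pk t = emeasure \<mu> {..<t} ^ (k - 1) * emeasure \<mu> {t<..} ^ (card T - k)"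

lemma int_w:
  "(\<integral>\<^sup>+y. w j S i t y \<partial>\<mu>) = (if i \<in> S then emeasure \<mu> {..<t} else if i \<in> T then emeasure \<mu> {t<..} else 1)"
proof -
  interpret prob_space \<mu> by (rule ps)
  show ?thesis unfolding w_def by (auto simp: sb emeasure_space_1)
qed

lemma psi_one:
  assumes j: "j \<in> T" and S: "S \<in> Sub j"
  shows "psi (\<lambda>_. 1) j S t = pk t"
proof -
  interpret product_sigma_finite "\<lambda>_. \<mu>" by (rule psf)
  have wm: "w j S i t \<in> borel_measurable \<mu>" for i
    unfolding w_def by (auto simp: measurable_cong_sets[OF sb refl])
  have "psi (\<lambda>_. 1) j S t = (\<integral>\<^sup>+x. (\<Prod>i\<in>I - {j}. w j S i t (x i)) \<partial>PiM (I - {j}) (\<lambda>_. \<mu>))"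
    unfolding psi_def W_def by simp
  also have "\<dots> = (\<Prod>i\<in>I - {j}. \<integral>\<^sup>+y. w j S i t y \<partial>\<mu>)"
    using finI wm by (intro product_nn_integral_prod) auto
  also have "\<dots> = (\<Prod>i\<in>I - {j}. if i \<in> S then emeasure \<mu> {..<t} else if i \<in> T then emeasure \<mu> {t<..} else 1)"
    by (simp add: int_w)
  also have "\<dots> = (\<Prod>i\<in>(I - {j}) \<inter> {i. i \<in> S}. emeasure \<mu> {..<t}) *
      (\<Prod>i\<in>(I - {j}) \<inter> - {i. i \<in> S}. if i \<in> T then emeasure \<mu> {t<..} else 1)"
    using finI by (subst prod.If_cases) auto
  also have "(\<Prod>i\<in>(I - {j}) \<inter> - {i. i \<in> S}. if i \<in> T then emeasure \<mu> {t<..} else 1)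
     = (\<Prod>i\<in>((I - {j}) \<inter> - {i. i \<in> S}) \<inter> {i. i \<in> T}. emeasure \<mu> {t<..}) * (\<Prod>i\<in>((I - {j}) \<inter> - {i. i \<in> S}) \<inter> - {i. i \<in> T}. 1)"
    using finI by (subst prod.If_cases) auto
  also have "(I - {j}) \<inter> {i. i \<in> S} = S" using S TI unfolding Sub_def by auto
  also have "((I - {j}) \<inter> - {i. i \<in> S}) \<inter> {i. i \<in> T} = T - {j} - S" using TI by auto
  finally have eq: "psi (\<lambda>_. 1) j S t = emeasure \<mu> {..<t} ^ card S * emeasure \<mu> {t<..} ^ card (T - {j} - S)"
    by simp
  have cS: "card S = k - 1" using S unfolding Sub_def by auto
  have "card (T - {j} - S) = card (T - {j}) - card S"
    using S finT unfolding Sub_def by (intro card_Diff_subset) (auto intro: finite_subset)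
  also have "\<dots> = card T - k" using j finT cS k1 by simp
  finally show ?thesis unfolding eq pk_def cS by simp
qed

lemma psi_ratio_mono:
  assumes j: "j \<in> T" and S: "S \<in> Sub j" and tt: "t \<le> t'"
    and \<Phi>m[measurable]: "\<Phi> \<in> borel_measurable P" and \<Phi>mono: "mono_on_space I \<Phi>"
  shows "psi \<Phi> j S t * pk t' \<le> psi \<Phi> j S t' * pk t"
proof -
  interpret product_sigma_finite "\<lambda>_. \<mu>" by (rule psf)
  have jI: "j \<in> I" using j TI by auto
  define u where "u x = \<Phi> (x(j := t'))" for x
  have Ieq': "insert j (I - {j}) = I" using jI by auto
  have um0: "(\<lambda>p. (snd p)(j := fst p)) \<in> measurable (borel \<Otimes>\<^sub>M PiM (I - {j}) (\<lambda>_. \<mu>)) P"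
    using upd_meas[of j] unfolding Ieq' .
  have upd: "(\<lambda>x. x(j := s)) \<in> measurable (PiM (I - {j}) (\<lambda>_. \<mu>)) P" for s
    using measurable_Pair2[OF um0, of s] by simp
  have um: "u \<in> borel_measurable (PiM (I - {j}) (\<lambda>_. \<mu>))"
    unfolding u_def using upd[of t'] by measurable
  have ext: "x(j := s) \<in> extensional I" if "x \<in> extensional (I - {j})" for x s
    using that jI by (auto simp: extensional_def)
  have umono: "mono_on_space (I - {j}) u"
    unfolding mono_on_space_def u_def
  proof (intro ballI impI)
    fix x y :: "nat \<Rightarrow> real" assume x: "x \<in> extensional (I - {j})" and y: "y \<in> extensional (I - {j})" and le: "\<forall>i\<in>I - {j}. x i \<le> y i"
    show "\<Phi> (x(j := t')) \<le> \<Phi> (y(j := t'))"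
      using \<Phi>mono ext[OF x] ext[OF y] le unfolding mono_on_space_def by auto
  qed
  have wm: "\<And>i s. w j S i s \<in> borel_measurable borel" unfolding w_def by auto
  have od: "(\<integral>\<^sup>+y. v y * w j S i t y \<partial>\<mu>) * (\<integral>\<^sup>+y. w j S i t' y \<partial>\<mu>) \<le> (\<integral>\<^sup>+y. v y * w j S i t' y \<partial>\<mu>) * (\<integral>\<^sup>+y. w j S i t y \<partial>\<mu>)"
    if "v \<in> borel_measurable borel" "mono v" for i v
  proof (cases "i \<in> S")
    case True
    then show ?thesis unfolding w_def using od_below[OF sb that tt] by simp
  next
    case False
    show ?thesis
    proof (cases "i \<in> T")
      case True
      then show ?thesis unfolding w_def using od_above[OF sb that tt] False by simp
    next
      case False2: False
      then show ?thesis unfolding w_def using False by simp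
    qed
  qed
  have D: "(\<integral>\<^sup>+x. u x * (\<Prod>i\<in>I - {j}. w j S i t (x i)) \<partial>PiM (I - {j}) (\<lambda>_. \<mu>)) * (\<Prod>i\<in>I - {j}. \<integral>\<^sup>+y. w j S i t' y \<partial>\<mu>)
    \<le> (\<integral>\<^sup>+x. u x * (\<Prod>i\<in>I - {j}. w j S i t' (x i)) \<partial>PiM (I - {j}) (\<lambda>_. \<mu>)) * (\<Prod>i\<in>I - {j}. \<integral>\<^sup>+y. w j S i t y \<partial>\<mu>)"
    using finI by (intro dom_prod[OF ps sb wm od _ um umono]) auto
  have pk_eq: "(\<Prod>i\<in>I - {j}. \<integral>\<^sup>+y. w j S i s y \<partial>\<mu>) = pk s" for s
  proof -
    have wm': "w j S i s \<in> borel_measurable \<mu>" for i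
      unfolding w_def by (auto simp: measurable_cong_sets[OF sb refl])
    have "(\<Prod>i\<in>I - {j}. \<integral>\<^sup>+y. w j S i s y \<partial>\<mu>) = (\<integral>\<^sup>+x. (\<Prod>i\<in>I - {j}. w j S i s (x i)) \<partial>PiM (I - {j}) (\<lambda>_. \<mu>))"
      using finI wm' by (intro product_nn_integral_prod[symmetric]) auto
    also have "\<dots> = psi (\<lambda>_. 1) j S s" unfolding psi_def W_def by simp
    finally show ?thesis using psi_one[OF j S] by simp
  qed
  have "psi \<Phi> j S t \<le> (\<integral>\<^sup>+x. u x * (\<Prod>i\<in>I - {j}. w j S i t (x i)) \<partial>PiM (I - {j}) (\<lambda>_. \<mu>))"
    unfolding psi_def W_def u_def
  proof (intro nn_integral_mono mult_right_mono)
    fix x assume x: "x \<in> space (PiM (I - {j}) (\<lambda>_. \<mu>))"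
    then have xe: "x \<in> extensional (I - {j})" by (simp add: space_PiM PiE_def)
    show "\<Phi> (x(j := t)) \<le> \<Phi> (x(j := t'))"
      using \<Phi>mono ext[OF xe, of t] ext[OF xe, of t'] tt unfolding mono_on_space_def by auto
  qed simp
  then have "psi \<Phi> j S t * pk t' \<le> (\<integral>\<^sup>+x. u x * (\<Prod>i\<in>I - {j}. w j S i t (x i)) \<partial>PiM (I - {j}) (\<lambda>_. \<mu>)) * pk t'"
    by (rule mult_right_mono) simp
  also have "\<dots> \<le> (\<integral>\<^sup>+x. u x * (\<Prod>i\<in>I - {j}. w j S i t' (x i)) \<partial>PiM (I - {j}) (\<lambda>_. \<mu>)) * pk t"
    using D unfolding pk_eq .
  also have "(\<integral>\<^sup>+x. u x * (\<Prod>i\<in>I - {j}. w j S i t' (x i)) \<partial>PiM (I - {j}) (\<lambda>_. \<mu>)) = psi \<Phi> j S t'"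
    unfolding psi_def W_def u_def by simp
  finally show ?thesis .
qed

end

context os_setup
begin

definition Psi :: "((nat \<Rightarrow> real) \<Rightarrow> ennreal) \<Rightarrow> real \<Rightarrow> ennreal" where
  "Psi \<Phi> t = (\<Sum>j\<in>T. \<Sum>S\<in>Sub j. psi \<Phi> j S t)"

definition K :: "real \<Rightarrow> ennreal" where
  "K t = Psi (\<lambda>_. 1) t"

lemma Psi_meas[measurable]:
  assumes "\<Phi> \<in> borel_measurable P"
  shows "Psi \<Phi> \<in> borel_measurable borel"
proof -
  have "\<And>j S. j \<in> T \<Longrightarrow> psi \<Phi> j S \<in> borel_measurable borel"
    using psi_meas assms TI by auto
  then show ?thesis unfolding Psi_def[abs_def] by measurable
qed

lemma K_meas[measurable]: "K \<in> borel_measurable borel"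
  unfolding K_def[abs_def] by (rule Psi_meas) simp

lemma dec2:
  assumes [measurable]: "\<Phi> \<in> borel_measurable P" "G \<in> borel_measurable borel"
  shows "(\<integral>\<^sup>+x. \<Phi> x * G (Z x) \<partial>P) = (\<integral>\<^sup>+t. G t * Psi \<Phi> t \<partial>\<mu>)"
proof -
  have pm: "\<And>j S. j \<in> T \<Longrightarrow> psi \<Phi> j S \<in> borel_measurable \<mu>"
    using psi_meas assms TI by (auto simp: measurable_cong_sets[OF sb refl])
  have Gm[measurable]: "G \<in> borel_measurable \<mu>" using measurable_cong_sets[OF sb refl] by simp
  have "(\<integral>\<^sup>+t. G t * Psi \<Phi> t \<partial>\<mu>) = (\<integral>\<^sup>+t. (\<Sum>j\<in>T. \<Sum>S\<in>Sub j. G t * psi \<Phi> j S t) \<partial>\<mu>)"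
    unfolding Psi_def by (simp add: sum_distrib_left)
  also have "\<dots> = (\<Sum>j\<in>T. \<integral>\<^sup>+t. (\<Sum>S\<in>Sub j. G t * psi \<Phi> j S t) \<partial>\<mu>)"
  proof (rule nn_integral_sum)
    fix j assume j: "j \<in> T"
    have [measurable]: "\<And>S. psi \<Phi> j S \<in> borel_measurable \<mu>" using pm j .
    show "(\<lambda>t. \<Sum>S\<in>Sub j. G t * psi \<Phi> j S t) \<in> borel_measurable \<mu>" by measurable
  qed
  also have "\<dots> = (\<Sum>j\<in>T. \<Sum>S\<in>Sub j. \<integral>\<^sup>+t. G t * psi \<Phi> j S t \<partial>\<mu>)"
  proof (intro sum.cong refl nn_integral_sum)
    fix j S assume j: "j \<in> T"
    have [measurable]: "\<And>S. psi \<Phi> j S \<in> borel_measurable \<mu>" using pm j .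
    show "(\<lambda>t. G t * psi \<Phi> j S t) \<in> borel_measurable \<mu>" by measurable
  qed
  finally show ?thesis using dec[OF assms] by simp
qed

definition C :: ennreal where "C = (\<Sum>j\<in>T. of_nat (card (Sub j)))"

lemma K_eq: "K t = C * pk t"
  unfolding K_def Psi_def C_def using psi_one by (simp add: sum_distrib_right)

lemma pk_le1: "pk t \<le> 1"
proof -
  interpret prob_space \<mu> by (rule ps)
  have a: "emeasure \<mu> {..<t} \<le> 1" "emeasure \<mu> {t<..} \<le> 1" by (auto simp: sb intro!: emeasure_le_1)
  have "emeasure \<mu> {..<t} ^ (k - 1) \<le> 1" using a(1) by (intro power_le_one) auto
  moreover have "emeasure \<mu> {t<..} ^ (card T - k) \<le> 1" using a(2) by (intro power_le_one) auto
  ultimately show ?thesis unfolding pk_def by (intro mult_le_one) auto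
qed

lemma K_fin: "K t < \<infinity>"
proof -
  have "C < \<infinity>" unfolding C_def infinity_ennreal_def
    using of_nat_less_top[of "\<Sum>j\<in>T. card (Sub j)"] unfolding of_nat_sum .
  moreover have "pk t < \<infinity>" unfolding infinity_ennreal_def using pk_le1[of t] ennreal_one_less_top by (rule le_less_trans)
  ultimately show ?thesis unfolding K_eq infinity_ennreal_def by (simp add: ennreal_mult_less_top)
qed

lemma Psi_le_K:
  assumes "\<And>x. \<Phi> x \<le> 1"
  shows "Psi \<Phi> t \<le> K t"
  unfolding K_def Psi_def psi_def
proof (intro sum_mono nn_integral_mono)
  fix x j S show "\<Phi> (x(j := t)) * W j S t x \<le> 1 * W j S t x"
    using assms by (rule mult_right_mono) simp
qed

lemma Psi_ratio:
  assumes tt: "t \<le> t'" and [measurable]: "\<Phi> \<in> borel_measurable P" and mono: "mono_on_space I \<Phi>"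
  shows "Psi \<Phi> t * K t' \<le> Psi \<Phi> t' * K t"
proof -
  have "Psi \<Phi> t * pk t' = (\<Sum>j\<in>T. \<Sum>S\<in>Sub j. psi \<Phi> j S t * pk t')"
    unfolding Psi_def by (simp add: sum_distrib_right)
  also have "\<dots> \<le> (\<Sum>j\<in>T. \<Sum>S\<in>Sub j. psi \<Phi> j S t' * pk t)"
  proof (intro sum_mono)
    fix j S assume "j \<in> T" "S \<in> Sub j"
    then show "psi \<Phi> j S t * pk t' \<le> psi \<Phi> j S t' * pk t"
      by (rule psi_ratio_mono[OF _ _ tt assms(2) mono])
  qed
  also have "\<dots> = Psi \<Phi> t' * pk t"
    unfolding Psi_def by (simp add: sum_distrib_right)
  finally have "Psi \<Phi> t * pk t' \<le> Psi \<Phi> t' * pk t" .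
  then have "C * (Psi \<Phi> t * pk t') \<le> C * (Psi \<Phi> t' * pk t)" by (rule mult_left_mono) simp
  then show ?thesis unfolding K_eq by (simp add: mult_ac)
qed

end

locale gl_setup =
  fixes \<rho> :: "real measure" and r g :: "real \<Rightarrow> real"
  assumes fm: "finite_measure \<rho>" and sbr[measurable_cong]: "sets \<rho> = sets borel"
    and rmono: "mono r" and r0: "\<And>y. 0 \<le> r y" and r1: "\<And>y. r y \<le> 1" and gmono: "mono g"
begin

lemma space_rho: "space \<rho> = UNIV"
  using sets_eq_imp_space_eq[OF sbr] by simp

lemma r_meas[measurable]: "r \<in> borel_measurable borel" using rmono by (rule borel_measurable_mono)
lemma g_meas[measurable]: "g \<in> borel_measurable borel" using gmono by (rule borel_measurable_mono)

definition L :: "real \<Rightarrow> real set" where "L s = g -` {s}"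

lemma L_sets[measurable]: "L s \<in> sets borel"
  unfolding L_def using measurable_sets[OF g_meas, of "{s}"] by simp

definition At :: "real set" where "At = {s. measure \<rho> (L s) \<noteq> 0}"

lemma At_countable: "countable At"
proof -
  interpret finite_measure \<rho> by (rule fm)
  have gm: "g \<in> measurable \<rho> borel" using measurable_cong_sets[OF sbr refl] by simp
  interpret nu: finite_measure "distr \<rho> borel g" using gm by (rule finite_measure_distr)
  have "measure (distr \<rho> borel g) {s} = measure \<rho> (L s)" for s
    using gm by (subst measure_distr) (auto simp: L_def space_rho)
  then show ?thesis using nu.countable_support unfolding At_def by simp
qed

lemma At_sets[measurable]: "At \<in> sets borel"
  by (rule sets.countable[OF _ At_countable]) (rule borel_singleton, rule sets.empty_sets)

definition Iint :: "real \<Rightarrow> ennreal" where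
  "Iint s = (\<integral>\<^sup>+y. indicator (L s) y * ennreal (r y) \<partial>\<rho>)"

definition avg :: "real \<Rightarrow> real" where
  "avg s = enn2real (Iint s) / measure \<rho> (L s)"

lemma Iint_le: "Iint s \<le> emeasure \<rho> (L s)"
proof -
  have "Iint s \<le> (\<integral>\<^sup>+y. indicator (L s) y \<partial>\<rho>)" unfolding Iint_def
    using r1 by (intro nn_integral_mono) (auto simp: indicator_def)
  also have "\<dots> = emeasure \<rho> (L s)" by (simp add: sbr)
  finally show ?thesis .
qed

lemma Iint_fin: "Iint s < \<infinity>"
proof -
  interpret finite_measure \<rho> by (rule fm)
  have "emeasure \<rho> (L s) < top" by (simp add: emeasure_eq_measure)
  then show ?thesis unfolding infinity_ennreal_def by (rule le_less_trans[OF Iint_le])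
qed

lemma Iint_real: "ennreal (enn2real (Iint s)) = Iint s"
  using Iint_fin[of s] by (simp add: infinity_ennreal_def)

lemma mL_pos:
  assumes "s \<in> At" shows "0 < measure \<rho> (L s)"
proof -
  have "measure \<rho> (L s) \<noteq> 0" using assms by (simp add: At_def)
  moreover have "0 \<le> measure \<rho> (L s)" by simp
  ultimately show ?thesis by linarith
qed

lemma emL: "emeasure \<rho> (L s) = ennreal (measure \<rho> (L s))"
proof -
  interpret finite_measure \<rho> by (rule fm)
  show ?thesis by (simp add: emeasure_eq_measure)
qed

lemma avg_le:
  assumes s: "s \<in> At" and c: "0 \<le> c" and le: "\<And>y. y \<in> L s \<Longrightarrow> r y \<le> c"
  shows "avg s \<le> c"
proof -
  have "Iint s \<le> (\<integral>\<^sup>+y. ennreal c * indicator (L s) y \<partial>\<rho>)" unfolding Iint_def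
    using le by (intro nn_integral_mono) (auto simp: indicator_def intro!: ennreal_leI)
  also have "\<dots> = ennreal c * emeasure \<rho> (L s)" by (rule nn_integral_cmult_indicator) (simp add: sbr)
  also have "\<dots> = ennreal (c * measure \<rho> (L s))" unfolding emL using c by (simp add: ennreal_mult)
  finally have "ennreal (enn2real (Iint s)) \<le> ennreal (c * measure \<rho> (L s))"
    by (simp only: Iint_real)
  then have "enn2real (Iint s) \<le> c * measure \<rho> (L s)"
    using c by (subst (asm) ennreal_le_iff) auto
  then show ?thesis unfolding avg_def using mL_pos[OF s] by (simp add: divide_le_eq)
qed

lemma avg_ge:
  assumes s: "s \<in> At" and c: "0 \<le> c" and le: "\<And>y. y \<in> L s \<Longrightarrow> c \<le> r y"
  shows "c \<le> avg s"
proof -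
  have "ennreal (c * measure \<rho> (L s)) = ennreal c * emeasure \<rho> (L s)" unfolding emL using c by (simp add: ennreal_mult)
  also have "\<dots> = (\<integral>\<^sup>+y. ennreal c * indicator (L s) y \<partial>\<rho>)" by (rule nn_integral_cmult_indicator[symmetric]) (simp add: sbr)
  also have "\<dots> \<le> Iint s" unfolding Iint_def
    using le by (intro nn_integral_mono) (auto simp: indicator_def intro!: ennreal_leI)
  finally have "ennreal (c * measure \<rho> (L s)) \<le> ennreal (enn2real (Iint s))"
    by (simp only: Iint_real)
  then have "c * measure \<rho> (L s) \<le> enn2real (Iint s)"
    by (subst (asm) ennreal_le_iff) auto
  then show ?thesis unfolding avg_def using mL_pos[OF s] by (simp add: le_divide_eq)
qed

lemma avg_identity:
  assumes s: "s \<in> At"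
  shows "ennreal (avg s) * emeasure \<rho> (L s) = Iint s"
proof -
  have "avg s * measure \<rho> (L s) = enn2real (Iint s)" unfolding avg_def using mL_pos[OF s] by simp
  moreover have "0 \<le> avg s" by (rule avg_ge[OF s]) (auto simp: r0)
  then have "ennreal (avg s) * ennreal (measure \<rho> (L s)) = ennreal (avg s * measure \<rho> (L s))"
    by (simp add: ennreal_mult)
  with \<open>avg s * measure \<rho> (L s) = enn2real (Iint s)\<close> show ?thesis unfolding emL
    by (simp add: Iint_real)
qed

definition SupR :: "real \<Rightarrow> real" where
  "SupR s = Sup (insert 0 (r ` {y. g y \<le> s}))"

lemma SupR_bdd: "bdd_above (insert 0 (r ` {y. g y \<le> s}))"
  using r1 by (intro bdd_aboveI[of _ 1]) auto

lemma SupR_ge: "g y \<le> s \<Longrightarrow> r y \<le> SupR s"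
  unfolding SupR_def by (intro cSup_upper SupR_bdd) auto

lemma SupR_ge0: "0 \<le> SupR s"
  unfolding SupR_def by (intro cSup_upper SupR_bdd) auto

lemma SupR_le: "0 \<le> c \<Longrightarrow> (\<And>y. g y \<le> s \<Longrightarrow> r y \<le> c) \<Longrightarrow> SupR s \<le> c"
  unfolding SupR_def by (intro cSup_least) auto

definition h :: "real \<Rightarrow> real" where
  "h s = (if s \<in> At then avg s else SupR s)"

lemma h01: "0 \<le> h s" "h s \<le> 1"
proof -
  show "0 \<le> h s"
  proof (cases "s \<in> At")
    case True then show ?thesis unfolding h_def by (auto intro: avg_ge simp: r0)
  qed (simp add: h_def SupR_ge0)
  show "h s \<le> 1"
  proof (cases "s \<in> At")
    case True then show ?thesis unfolding h_def by (auto intro: avg_le simp: r1)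
  qed (auto simp add: h_def r1 intro: SupR_le)
qed

lemma lt_of_g:
  assumes "g y < g y'" shows "y < y'"
proof (rule ccontr)
  assume "\<not> y < y'"
  then have "y' \<le> y" by simp
  then have "g y' \<le> g y" using gmono by (simp add: mono_def)
  then show False using assms by simp
qed

lemma h_mono: "mono h"
proof (rule monoI)
  fix s s' :: real assume ss: "s \<le> s'"
  show "h s \<le> h s'"
  proof (cases "s = s'")
    case True then show ?thesis by simp
  next
    case False
    then have lt: "s < s'" using ss by simp
    show ?thesis
    proof (cases "s \<in> At")
      case sA: True
      show ?thesis
      proof (cases "s' \<in> At")
        case s'A: True
        have "avg s \<le> avg s'"
        proof (rule avg_ge[OF s'A])
          show "0 \<le> avg s" by (rule avg_ge[OF sA]) (auto simp: r0)
          fix y' assume y': "y' \<in> L s'"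
          show "avg s \<le> r y'"
          proof (rule avg_le[OF sA])
            show "0 \<le> r y'" by (rule r0)
            fix y assume "y \<in> L s"
            then have "y < y'" using y' lt lt_of_g unfolding L_def by auto
            then show "r y \<le> r y'" using rmono by (auto simp: mono_def)
          qed
        qed
        then show ?thesis unfolding h_def using sA s'A by simp
      next
        case s'A: False
        have "avg s \<le> SupR s'"
          by (rule avg_le[OF sA SupR_ge0]) (use lt in \<open>auto simp: L_def intro!: SupR_ge\<close>)
        then show ?thesis unfolding h_def using sA s'A by simp
      qed
    next
      case sA: False
      show ?thesis
      proof (cases "s' \<in> At")
        case s'A: True
        have "SupR s \<le> avg s'"
        proof (rule avg_ge[OF s'A SupR_ge0])
          fix y' assume y': "y' \<in> L s'"
          show "SupR s \<le> r y'"
          proof (rule SupR_le[OF r0])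
            fix y assume "g y \<le> s"
            then have "y < y'" using y' lt lt_of_g unfolding L_def by auto
            then show "r y \<le> r y'" using rmono by (auto simp: mono_def)
          qed
        qed
        then show ?thesis unfolding h_def using sA s'A by simp
      next
        case s'A: False
        have "SupR s \<le> SupR s'"
          by (rule SupR_le[OF SupR_ge0]) (use ss in \<open>auto intro!: SupR_ge\<close>)
        then show ?thesis unfolding h_def using sA s'A by simp
      qed
    qed
  qed
qed

end

context gl_setup
begin

lemma h_meas[measurable]: "h \<in> borel_measurable borel"
  using h_mono by (rule borel_measurable_mono)

lemma hg_meas[measurable]: "(\<lambda>y. ennreal (h (g y))) \<in> borel_measurable \<rho>"
  by (simp add: measurable_cong_sets[OF sbr refl])

lemma dens_L:
  assumes s: "s \<in> At"
  shows "emeasure (density \<rho> (\<lambda>y. ennreal (h (g y)))) (L s) = emeasure (density \<rho> (\<lambda>y. ennreal (r y))) (L s)"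
proof -
  have "emeasure (density \<rho> (\<lambda>y. ennreal (h (g y)))) (L s) = (\<integral>\<^sup>+y. ennreal (h (g y)) * indicator (L s) y \<partial>\<rho>)"
    by (rule emeasure_density) (auto simp: sbr)
  also have "\<dots> = (\<integral>\<^sup>+y. ennreal (avg s) * indicator (L s) y \<partial>\<rho>)"
    using s by (intro nn_integral_cong) (auto simp: indicator_def L_def h_def)
  also have "\<dots> = ennreal (avg s) * emeasure \<rho> (L s)"
    by (rule nn_integral_cmult_indicator) (simp add: sbr)
  also have "\<dots> = Iint s" by (rule avg_identity[OF s])
  also have "\<dots> = emeasure (density \<rho> (\<lambda>y. ennreal (r y))) (L s)"
    unfolding Iint_def by (subst emeasure_density) (auto simp: sbr mult.commute)
  finally show ?thesis .
qed

lemma dens_At: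
  assumes B: "B \<in> sets borel"
  shows "emeasure (density \<rho> (\<lambda>y. ennreal (h (g y)))) (g -` (B \<inter> At)) = emeasure (density \<rho> (\<lambda>y. ennreal (r y))) (g -` (B \<inter> At))"
proof -
  have eq: "g -` (B \<inter> At) = (\<Union>s\<in>B \<inter> At. L s)" unfolding L_def by auto
  have disj: "disjoint_family_on L (B \<inter> At)" unfolding disjoint_family_on_def L_def by auto
  have cnt: "countable (B \<inter> At)" using At_countable by (rule countable_subset[rotated]) auto
  have hm: "(\<lambda>y. ennreal (h (g y))) \<in> borel_measurable \<rho>"
    by (rule hg_meas)
  have rm: "(\<lambda>y. ennreal (r y)) \<in> borel_measurable \<rho>"
    by (auto simp: measurable_cong_sets[OF sbr refl])
  have Ls: "L s \<in> sets (density \<rho> f)" for s f by (simp add: sbr)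
  show ?thesis unfolding eq
    by (subst (1 2) emeasure_UN_countable[OF Ls cnt disj]) (auto intro!: nn_integral_cong dens_L)
qed

lemma h_eq_AE: "AE y in \<rho>. g y \<notin> At \<longrightarrow> h (g y) = r y"
proof -
  interpret finite_measure \<rho> by (rule fm)
  have "AE y in \<rho>. \<forall>q\<in>\<rat>. g q \<notin> At \<longrightarrow> y \<notin> L (g q)"
  proof (subst AE_ball_countable[OF countable_rat], intro ballI AE_impI)
    fix q :: real assume "g q \<notin> At"
    then have "measure \<rho> (L (g q)) = 0" unfolding At_def by simp
    then have "L (g q) \<in> null_sets \<rho>"
      by (auto simp: null_sets_def sbr emeasure_eq_measure)
    then show "AE y in \<rho>. y \<notin> L (g q)" by (rule AE_not_in)
  qed
  then show ?thesis
  proof (rule AE_mp, intro AE_I2 impI)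
    fix y assume good: "\<forall>q\<in>\<rat>. g q \<notin> At \<longrightarrow> y \<notin> L (g q)" and nA: "g y \<notin> At"
    have "SupR (g y) = r y"
    proof (rule antisym)
      show "r y \<le> SupR (g y)" by (rule SupR_ge) simp
      show "SupR (g y) \<le> r y"
      proof (rule SupR_le[OF r0])
        fix y' assume y': "g y' \<le> g y"
        show "r y' \<le> r y"
        proof (cases "y' \<le> y")
          case True then show ?thesis using rmono by (simp add: mono_def)
        next
          case False
          then have "y < y'" by simp
          then obtain q where q: "q \<in> \<rat>" "y < q" "q < y'" using Rats_dense_in_real by blast
          have "g y \<le> g q" "g q \<le> g y'" using q gmono by (auto simp: mono_def)
          then have "g q = g y" using y' by simp
          then have "y \<in> L (g q)" unfolding L_def by simp
          moreover have "g q \<notin> At" using nA \<open>g q = g y\<close> by simp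
          ultimately show ?thesis using good q(1) by blast
        qed
      qed
    qed
    then show "h (g y) = r y" unfolding h_def using nA by simp
  qed
qed

lemma h_identity:
  assumes B: "B \<in> sets borel"
  shows "(\<integral>\<^sup>+y. indicator B (g y) * ennreal (h (g y)) \<partial>\<rho>) = (\<integral>\<^sup>+y. indicator B (g y) * ennreal (r y) \<partial>\<rho>)"
proof -
  have hm[measurable]: "(\<lambda>y. ennreal (h (g y))) \<in> borel_measurable \<rho>"
    by (rule hg_meas)
  have rm[measurable]: "(\<lambda>y. ennreal (r y)) \<in> borel_measurable \<rho>"
    by (auto simp: measurable_cong_sets[OF sbr refl])
  have gm[measurable]: "g \<in> borel_measurable \<rho>" by (auto simp: measurable_cong_sets[OF sbr refl])
  have sets1[measurable]: "g -` (B \<inter> At) \<in> sets \<rho>" "g -` (B - At) \<in> sets \<rho>"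
    using measurable_sets[OF g_meas, of "B \<inter> At"] measurable_sets[OF g_meas, of "B - At"] B
    by (auto simp: sbr)
  have split: "indicator B (g y) = indicator (g -` (B \<inter> At)) y + (indicator (g -` (B - At)) y :: ennreal)" for y
    by (auto simp: indicator_def)
  have part: "(\<integral>\<^sup>+y. indicator B (g y) * f y \<partial>\<rho>) =
      emeasure (density \<rho> f) (g -` (B \<inter> At)) + (\<integral>\<^sup>+y. indicator (g -` (B - At)) y * f y \<partial>\<rho>)"
    if fm[measurable]: "f \<in> borel_measurable \<rho>" for f
  proof -
    have "(\<integral>\<^sup>+y. indicator B (g y) * f y \<partial>\<rho>) = (\<integral>\<^sup>+y. f y * indicator (g -` (B \<inter> At)) y + indicator (g -` (B - At)) y * f y \<partial>\<rho>)"
      unfolding split by (intro nn_integral_cong) (simp add: distrib_left distrib_right mult.commute)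
    also have "\<dots> = (\<integral>\<^sup>+y. f y * indicator (g -` (B \<inter> At)) y \<partial>\<rho>) + (\<integral>\<^sup>+y. indicator (g -` (B - At)) y * f y \<partial>\<rho>)"
    proof (rule nn_integral_add)
      show "(\<lambda>y. f y * indicator (g -` (B \<inter> At)) y) \<in> borel_measurable \<rho>"
        using sets1(1) by (intro borel_measurable_times_ennreal fm borel_measurable_indicator)
      show "(\<lambda>y. indicator (g -` (B - At)) y * f y) \<in> borel_measurable \<rho>"
        using sets1(2) by (intro borel_measurable_times_ennreal fm borel_measurable_indicator)
    qed
    also have "(\<integral>\<^sup>+y. f y * indicator (g -` (B \<inter> At)) y \<partial>\<rho>) = emeasure (density \<rho> f) (g -` (B \<inter> At))"
      by (rule emeasure_density[symmetric, OF fm sets1(1)])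
    finally show ?thesis .
  qed
  have p2: "(\<integral>\<^sup>+y. indicator (g -` (B - At)) y * ennreal (h (g y)) \<partial>\<rho>) = (\<integral>\<^sup>+y. indicator (g -` (B - At)) y * ennreal (r y) \<partial>\<rho>)"
  proof (intro nn_integral_cong_AE)
    show "AE y in \<rho>. indicator (g -` (B - At)) y * ennreal (h (g y)) = indicator (g -` (B - At)) y * ennreal (r y)"
      using h_eq_AE by eventually_elim (auto simp: indicator_def)
  qed
  show ?thesis unfolding part[OF hm] part[OF rm] dens_At[OF B] p2 ..
qed

end

context os_setup
begin

lemma core:
  fixes g :: "real \<Rightarrow> real"
  assumes \<Phi>m[measurable]: "\<Phi> \<in> borel_measurable P" and \<Phi>1: "\<And>x. \<Phi> x \<le> 1"
    and \<Phi>mono: "mono_on_space I \<Phi>" and gmono: "mono g"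
  shows "\<exists>h. mono h \<and> (\<forall>s. 0 \<le> h s \<and> h s \<le> 1) \<and>
    (\<forall>B\<in>sets borel. (\<integral>\<^sup>+x. indicator B (g (Z x)) * ennreal (h (g (Z x))) \<partial>P) = (\<integral>\<^sup>+x. \<Phi> x * indicator B (g (Z x)) \<partial>P))"
proof -
  interpret P: prob_space P by (rule P_prob)
  define \<rho> where "\<rho> = density \<mu> K"
  have sbr: "sets \<rho> = sets borel" unfolding \<rho>_def by (simp add: sb)
  have Km: "K \<in> borel_measurable \<mu>" by (simp add: measurable_cong_sets[OF sb refl])
  have "emeasure \<rho> (space \<rho>) = (\<integral>\<^sup>+t. K t \<partial>\<mu>)"
    unfolding \<rho>_def by (subst emeasure_density) (auto simp: Km)
  also have "\<dots> = (\<integral>\<^sup>+t. (\<lambda>_. 1) t * Psi (\<lambda>_. 1) t \<partial>\<mu>)" unfolding K_def by simp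
  also have "\<dots> = (\<integral>\<^sup>+x. 1 * (\<lambda>_. 1) (Z x) \<partial>P)" by (subst dec2) auto
  also have "\<dots> = 1" using P.emeasure_space_1 by simp
  finally have fin: "finite_measure \<rho>" by (intro finite_measureI) simp
  define r0 where "r0 t = (if K t = 0 then 0 else enn2real (Psi \<Phi> t) / enn2real (K t))" for t
  have PsiK: "Psi \<Phi> t \<le> K t" for t using Psi_le_K[OF \<Phi>1] .
  have Kfin: "K t \<noteq> \<infinity>" for t using K_fin[of t] by simp
  have Psifin: "Psi \<Phi> t \<noteq> \<infinity>" for t using PsiK[of t] K_fin[of t] by (auto simp: top_unique)
  have Kpos: "0 < enn2real (K t)" if "K t \<noteq> 0" for t
    using that Kfin[of t] by (simp add: enn2real_positive_iff less_top zero_less_iff_neq_zero)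
  have r0_01: "0 \<le> r0 t \<and> r0 t \<le> 1" for t
  proof (cases "K t = 0")
    case False
    have "enn2real (Psi \<Phi> t) \<le> enn2real (K t)" using PsiK[of t] Kfin[of t] by (intro enn2real_mono) (auto simp: less_top)
    then show ?thesis unfolding r0_def using False Kpos[OF False] by (simp add: divide_le_eq)
  qed (simp add: r0_def)
  have r0_mono: "r0 t \<le> r0 t'" if "t \<le> t'" "K t \<noteq> 0" "K t' \<noteq> 0" for t t'
  proof -
    have "Psi \<Phi> t * K t' \<le> Psi \<Phi> t' * K t" using Psi_ratio[OF that(1) \<Phi>m \<Phi>mono] .
    then have "enn2real (Psi \<Phi> t * K t') \<le> enn2real (Psi \<Phi> t' * K t)"
      using Kfin Psifin by (intro enn2real_mono) (auto simp: less_top[symmetric] ennreal_mult_eq_top_iff)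
    then have "enn2real (Psi \<Phi> t) * enn2real (K t') \<le> enn2real (Psi \<Phi> t') * enn2real (K t)"
      by (simp add: enn2real_mult)
    then show ?thesis unfolding r0_def using that Kpos[OF that(2)] Kpos[OF that(3)]
      by (simp add: divide_simps mult.commute)
  qed
  define rt where "rt t = Sup (insert 0 {r0 s | s. s \<le> t \<and> K s \<noteq> 0})" for t
  have bdd: "bdd_above (insert 0 {r0 s | s. s \<le> t \<and> K s \<noteq> 0})" for t
    using r0_01 by (intro bdd_aboveI[of _ 1]) auto
  have rt_mono: "mono rt"
  proof (rule monoI)
    fix t t' :: real assume "t \<le> t'"
    then show "rt t \<le> rt t'" unfolding rt_def
      by (intro cSup_subset_mono bdd) auto
  qed
  have rt_01: "0 \<le> rt t" "rt t \<le> 1" for t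
    unfolding rt_def using r0_01 by (auto intro!: cSup_upper bdd cSup_least)
  have rt_eq: "rt t = r0 t" if "K t \<noteq> 0" for t
    unfolding rt_def
  proof (rule cSup_eq_maximum)
    show "r0 t \<in> insert 0 {r0 s |s. s \<le> t \<and> K s \<noteq> 0}" using that by auto
    fix x assume "x \<in> insert 0 {r0 s |s. s \<le> t \<and> K s \<noteq> 0}"
    then show "x \<le> r0 t" using r0_01 r0_mono that by auto
  qed
  have Psi_rt: "Psi \<Phi> t = ennreal (rt t) * K t" for t
  proof (cases "K t = 0")
    case True then show ?thesis using PsiK[of t] by simp
  next
    case False
    have "ennreal (rt t) * K t = ennreal (r0 t) * ennreal (enn2real (K t))"
      using rt_eq[OF False] Kfin[of t] by (simp add: ennreal_enn2real_if)
    also have "\<dots> = ennreal (r0 t * enn2real (K t))" using r0_01[of t] by (simp add: ennreal_mult)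
    also have "r0 t * enn2real (K t) = enn2real (Psi \<Phi> t)"
      unfolding r0_def using False Kpos[OF False] by simp
    also have "ennreal (enn2real (Psi \<Phi> t)) = Psi \<Phi> t" using Psifin[of t] by (simp add: ennreal_enn2real_if)
    finally show ?thesis ..
  qed
  interpret G: gl_setup \<rho> rt g
    by (rule gl_setup.intro[OF fin sbr rt_mono rt_01(1) rt_01(2) gmono])
  have hm[measurable]: "G.h \<in> borel_measurable borel" by (rule G.h_meas)
  have rtm[measurable]: "rt \<in> borel_measurable borel" using rt_mono by (rule borel_measurable_mono)
  have gm[measurable]: "g \<in> borel_measurable borel" using gmono by (rule borel_measurable_mono)
  show ?thesis
  proof (intro exI conjI ballI allI)
    show "mono G.h" by (rule G.h_mono)
    fix s show "0 \<le> G.h s" "G.h s \<le> 1" using G.h01 by auto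
  next
    fix B :: "real set" assume B[measurable]: "B \<in> sets borel"
    have "(\<integral>\<^sup>+x. indicator B (g (Z x)) * ennreal (G.h (g (Z x))) \<partial>P)
        = (\<integral>\<^sup>+x. 1 * (\<lambda>t. indicator B (g t) * ennreal (G.h (g t))) (Z x) \<partial>P)" by simp
    also have "\<dots> = (\<integral>\<^sup>+t. (indicator B (g t) * ennreal (G.h (g t))) * K t \<partial>\<mu>)"
      unfolding K_def by (subst dec2) auto
    also have "\<dots> = (\<integral>\<^sup>+t. indicator B (g t) * ennreal (G.h (g t)) \<partial>\<rho>)"
    proof -
      have "(\<lambda>t. indicator B (g t) * ennreal (G.h (g t))) \<in> borel_measurable borel" by measurable
      then have m: "(\<lambda>t. indicator B (g t) * ennreal (G.h (g t))) \<in> borel_measurable \<mu>"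
        by (simp add: measurable_cong_sets[OF sb refl])
      show ?thesis using nn_integral_density[OF Km m, folded \<rho>_def] by (simp add: mult.commute)
    qed
    also have "\<dots> = (\<integral>\<^sup>+t. indicator B (g t) * ennreal (rt t) \<partial>\<rho>)"
      by (rule G.h_identity[OF B])
    also have "\<dots> = (\<integral>\<^sup>+t. indicator B (g t) * (ennreal (rt t) * K t) \<partial>\<mu>)"
    proof -
      have "(\<lambda>t. indicator B (g t) * ennreal (rt t)) \<in> borel_measurable borel" by measurable
      then have m: "(\<lambda>t. indicator B (g t) * ennreal (rt t)) \<in> borel_measurable \<mu>"
        by (simp add: measurable_cong_sets[OF sb refl])
      show ?thesis using nn_integral_density[OF Km m, folded \<rho>_def] by (simp add: mult_ac)
    qed
    also have "\<dots> = (\<integral>\<^sup>+t. indicator B (g t) * Psi \<Phi> t \<partial>\<mu>)" unfolding Psi_rt ..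
    also have "\<dots> = (\<integral>\<^sup>+x. \<Phi> x * indicator B (g (Z x)) \<partial>P)"
      by (subst dec2) auto
    finally show "(\<integral>\<^sup>+x. indicator B (g (Z x)) * ennreal (G.h (g (Z x))) \<partial>P) = (\<integral>\<^sup>+x. \<Phi> x * indicator B (g (Z x)) \<partial>P)" .
  qed
qed

end

lemma bridge:
  fixes M :: "'a measure" and V W :: "'a \<Rightarrow> real" and h :: "real \<Rightarrow> real"
  assumes ps: "prob_space M" and Vm[measurable]: "V \<in> borel_measurable M" and Wm[measurable]: "W \<in> borel_measurable M"
    and W01: "\<And>\<omega>. 0 \<le> W \<omega> \<and> W \<omega> \<le> 1" and hmono: "mono h" and h01: "\<And>s. 0 \<le> h s \<and> h s \<le> 1"
    and eq: "\<And>B. B \<in> sets borel \<Longrightarrow> (\<integral>\<^sup>+\<omega>. indicator B (V \<omega>) * ennreal (h (V \<omega>)) \<partial>M) = (\<integral>\<^sup>+\<omega>. ennreal (W \<omega>) * indicator B (V \<omega>) \<partial>M)"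
  shows "AE \<omega> in M. h (V \<omega>) = real_cond_exp M (vimage_algebra (space M) V borel) W \<omega>"
proof -
  interpret prob_space M by (rule ps)
  let ?F = "vimage_algebra (space M) V borel"
  have hm[measurable]: "h \<in> borel_measurable borel" using hmono by (rule borel_measurable_mono)
  have sub: "subalgebra M ?F" unfolding subalgebra_def
    using sets_image_in_sets[OF refl Vm] by simp
  interpret finite_measure_subalgebra M ?F
    by unfold_locales (rule sub)
  have VF: "V \<in> measurable ?F borel" by (rule measurable_vimage_algebra1) simp
  have hVF: "(\<lambda>\<omega>. h (V \<omega>)) \<in> borel_measurable ?F" using measurable_compose[OF VF hm] .
  have int1: "integrable M W"
    using W01 by (intro integrable_const_bound[where B=1]) auto
  have int2: "integrable M (\<lambda>\<omega>. h (V \<omega>))"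
    using h01 by (intro integrable_const_bound[where B=1]) auto
  have "AE \<omega> in M. real_cond_exp M ?F W \<omega> = h (V \<omega>)"
  proof (rule real_cond_exp_charact[OF _ int1 int2 hVF])
    fix A assume "A \<in> sets ?F"
    then obtain B where B: "B \<in> sets borel" and A: "A = V -` B \<inter> space M"
      using sets_vimage_algebra2[of V "space M" borel] by auto
    note B[measurable]
    have ind: "indicator A \<omega> = (indicator B (V \<omega>) :: real)" if "\<omega> \<in> space M" for \<omega>
      using that A by (auto simp: indicator_def)
    have "(\<integral>\<omega>\<in>A. W \<omega> \<partial>M) = (\<integral>\<omega>. indicator B (V \<omega>) * W \<omega> \<partial>M)"
      unfolding set_lebesgue_integral_def using ind by (intro Bochner_Integration.integral_cong) auto
    also have "\<dots> = enn2real (\<integral>\<^sup>+\<omega>. ennreal (indicator B (V \<omega>) * W \<omega>) \<partial>M)"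
      using W01 by (intro integral_eq_nn_integral) auto
    also have "(\<integral>\<^sup>+\<omega>. ennreal (indicator B (V \<omega>) * W \<omega>) \<partial>M) = (\<integral>\<^sup>+\<omega>. ennreal (W \<omega>) * indicator B (V \<omega>) \<partial>M)"
      by (intro nn_integral_cong) (auto simp: indicator_def)
    also have "\<dots> = (\<integral>\<^sup>+\<omega>. indicator B (V \<omega>) * ennreal (h (V \<omega>)) \<partial>M)" using eq[OF B] ..
    also have "\<dots> = (\<integral>\<^sup>+\<omega>. ennreal (indicator B (V \<omega>) * h (V \<omega>)) \<partial>M)"
      by (intro nn_integral_cong) (auto simp: indicator_def)
    also have "enn2real \<dots> = (\<integral>\<omega>. indicator B (V \<omega>) * h (V \<omega>) \<partial>M)"
      using h01 by (intro integral_eq_nn_integral[symmetric]) auto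
    also have "\<dots> = (\<integral>\<omega>\<in>A. h (V \<omega>) \<partial>M)"
      unfolding set_lebesgue_integral_def using ind by (intro Bochner_Integration.integral_cong) auto
    finally show "(\<integral>\<omega>\<in>A. W \<omega> \<partial>M) = (\<integral>\<omega>\<in>A. h (V \<omega>) \<partial>M)" .
  qed
  then show ?thesis by eventually_elim simp
qed

lemma order_stat_cong:
  assumes "finite T" "\<And>i. i \<in> T \<Longrightarrow> x i = y i"
  shows "order_stat T k x = order_stat T k y"
proof -
  have e: "map x (sorted_list_of_set T) = map y (sorted_list_of_set T)"
    using assms by (intro map_cong) auto
  show ?thesis unfolding order_stat_def e ..
qed

theorem theorem5:
  fixes M :: "'a measure" and X :: "nat \<Rightarrow> 'a \<Rightarrow> real" and n :: nat
    and T :: "nat set" and k :: nat and g :: "real \<Rightarrow> real"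
    and f :: "nat \<Rightarrow> (nat \<Rightarrow> real) \<Rightarrow> real" and m :: nat
    and Y :: "nat \<Rightarrow> 'a \<Rightarrow> real"
  assumes "prob_space M"
    and X_meas: "\<And>i. i \<in> {1..n} \<Longrightarrow> X i \<in> borel_measurable M"
    and X_indep: "prob_space.indep_vars M (\<lambda>_. borel) X {1..n}"
    and X_ident: "\<And>i. i \<in> {1..n} \<Longrightarrow> distr M borel (X i) = distr M borel (X 1)"
    and X_cont: "\<And>i x. i \<in> {1..n} \<Longrightarrow> measure M {\<omega> \<in> space M. X i \<omega> = x} = 0"
    and m: "1 \<le> m"
    and T: "T \<subseteq> {1..n}"
    and k: "1 \<le> k" "k \<le> card T"
    and g_mono: "mono g"
    and Y1: "\<And>\<omega>. Y 1 \<omega> = g (order_stat T k (\<lambda>i. X i \<omega>))"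
    and f_meas: "\<And>j. j \<in> {2..m} \<Longrightarrow> f j \<in> borel_measurable (vec_space n)"
    and f_mono: "\<And>j. j \<in> {2..m} \<Longrightarrow> nondecr_fun n (f j)"
    and Yj: "\<And>j \<omega>. j \<in> {2..m} \<Longrightarrow> Y j \<omega> = f j (rvec n X \<omega>)"
  shows "PRDS M m Y {1}"
proof -
  interpret prob_space M by fact
  define I where "I = {1..n}"
  have finT: "finite T" using T finite_subset by blast
  have "T \<noteq> {}" using k by auto
  then have n1: "1 \<in> {1..n}" using T by auto
  have X1m: "X 1 \<in> borel_measurable M" using X_meas[OF n1] .
  define \<mu> where "\<mu> = distr M borel (X 1)"
  have ps: "prob_space \<mu>" unfolding \<mu>_def using X1m by (rule prob_space_distr)
  have sb: "sets \<mu> = sets borel" unfolding \<mu>_def by simp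
  have cont: "emeasure \<mu> {x} = 0" for x
  proof -
    have "emeasure \<mu> {x} = emeasure M (X 1 -` {x} \<inter> space M)"
      unfolding \<mu>_def using X1m by (subst emeasure_distr) auto
    also have "X 1 -` {x} \<inter> space M = {\<omega> \<in> space M. X 1 \<omega> = x}" by auto
    also have "emeasure M \<dots> = ennreal (measure M {\<omega> \<in> space M. X 1 \<omega> = x})"
      using X1m by (intro emeasure_eq_measure)
    also have "\<dots> = 0" using X_cont[OF n1] by simp
    finally show ?thesis .
  qed
  interpret os: os_setup \<mu> I T k
  proof (rule os_setup.intro[OF ps sb cont])
    show "finite I" unfolding I_def by simp
    show "T \<subseteq> I" unfolding I_def by (rule T)
  qed (rule k(1), rule k(2))
  define Xv where "Xv \<omega> = (\<lambda>i\<in>I. X i \<omega>)" for \<omega>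
  have Xvm[measurable]: "Xv \<in> measurable M (PiM I (\<lambda>_. borel))"
    unfolding Xv_def[abs_def] using X_meas unfolding I_def by (intro measurable_restrict) auto
  have iff: "indep_vars (\<lambda>_. borel) X I \<longleftrightarrow> distr M (PiM I (\<lambda>_. borel)) (\<lambda>x. \<lambda>i\<in>I. X i x) = PiM I (\<lambda>i. distr M borel (X i))"
  proof (rule indep_vars_iff_distr_eq_PiM')
    show "I \<noteq> {}" using n1 unfolding I_def by blast
    fix i assume "i \<in> I" then show "random_variable borel (X i)" using X_meas unfolding I_def by blast
  qed
  have "distr M (PiM I (\<lambda>_. borel)) Xv = PiM I (\<lambda>i. distr M borel (X i))"
    unfolding Xv_def[abs_def] using iff X_indep unfolding I_def by blast
  also have "\<dots> = os.P" unfolding \<mu>_def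
  proof (rule PiM_cong[OF refl])
    fix i assume "i \<in> I" then show "distr M borel (X i) = distr M borel (X 1)" using X_ident unfolding I_def by blast
  qed
  finally have distrX: "distr M (PiM I (\<lambda>_. borel)) Xv = os.P" .
  have setsP: "sets os.P = sets (PiM I (\<lambda>_. borel))" using sb by (intro sets_PiM_cong) auto
  have rvecX: "rvec n X \<omega> = Xv \<omega>" for \<omega> unfolding rvec_def Xv_def I_def ..
  have Zeq: "order_stat T k (\<lambda>i. X i \<omega>) = os.Z (Xv \<omega>)" for \<omega>
    using T finT by (intro order_stat_cong) (auto simp: Xv_def I_def)
  have Y1eq: "Y 1 \<omega> = g (os.Z (Xv \<omega>))" for \<omega> using Y1 Zeq by simp
  have gm[measurable]: "g \<in> borel_measurable borel" using g_mono by (rule borel_measurable_mono)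
  have ZmB[measurable]: "os.Z \<in> borel_measurable (PiM I (\<lambda>_. borel))"
    using finT k T unfolding I_def by (intro order_stat_measurable[where F="\<lambda>x. x"]) auto
  have ZmP[measurable]: "os.Z \<in> borel_measurable os.P" using os.Z_meas .
  have Y1m[measurable]: "Y 1 \<in> borel_measurable M"
  proof -
    have e: "Y 1 = (\<lambda>\<omega>. g (os.Z (Xv \<omega>)))" by (intro ext) (rule Y1eq)
    show ?thesis unfolding e by measurable
  qed
  show ?thesis unfolding PRDS_def
  proof (intro ballI impI)
    fix i D assume i: "i \<in> {1::nat}" and Dm: "D \<in> sets (vec_space m)" and Dnd: "nondecr_set m D"
    then have i1: "i = 1" by simp
    define yv where "yv x = (\<lambda>j\<in>{1..m}. if j = 1 then g (os.Z x) else f j x)" for x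
    have rvecY: "rvec m Y \<omega> = yv (Xv \<omega>)" for \<omega>
      unfolding rvec_def yv_def
    proof (intro restrict_ext)
      fix j assume j: "j \<in> {1..m}"
      show "Y j \<omega> = (if j = 1 then g (os.Z (Xv \<omega>)) else f j (Xv \<omega>))"
      proof (cases "j = 1")
        case True then show ?thesis using Y1eq by simp
      next
        case False
        then have "j \<in> {2..m}" using j by auto
        then show ?thesis using Yj rvecX False by simp
      qed
    qed
    have fmB: "f j \<in> borel_measurable (PiM I (\<lambda>_. borel))" if "j \<in> {2..m}" for j
      using f_meas[OF that] unfolding vec_space_def I_def .
    have yvmB: "yv \<in> measurable (PiM I (\<lambda>_. borel)) (vec_space m)"
      unfolding vec_space_def yv_def[abs_def]
    proof (intro measurable_restrict)
      fix j assume j: "j \<in> {1..m}"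
      show "(\<lambda>x. if j = 1 then g (os.Z x) else f j x) \<in> borel_measurable (PiM I (\<lambda>_. borel))"
      proof (cases "j = 1")
        case True then show ?thesis by simp
      next
        case False then have "j \<in> {2..m}" using j by auto
        then show ?thesis using fmB False by simp
      qed
    qed
    have yvmP: "yv \<in> measurable os.P (vec_space m)"
      using yvmB by (simp add: measurable_cong_sets[OF setsP refl])
    define \<Phi> where "\<Phi> x = (indicator D (yv x) :: ennreal)" for x
    have \<Phi>m: "\<Phi> \<in> borel_measurable os.P"
      unfolding \<Phi>_def[abs_def] using measurable_compose[OF yvmP borel_measurable_indicator[OF Dm]] by simp
    have \<Phi>1: "\<Phi> x \<le> 1" for x unfolding \<Phi>_def by (simp add: indicator_def)
    have sp: "space (vec_space j) = extensional {1..j}" for j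
      unfolding vec_space_def by (auto simp: space_PiM PiE_def)
    have \<Phi>mono: "mono_on_space I \<Phi>"
      unfolding mono_on_space_def
    proof (intro ballI impI)
      fix x y :: "nat \<Rightarrow> real" assume x: "x \<in> extensional I" and y: "y \<in> extensional I" and le: "\<forall>i\<in>I. x i \<le> y i"
      have yvle: "vec_le m (yv x) (yv y)" unfolding vec_le_def
      proof
        fix j assume j: "j \<in> {1..m}"
        show "yv x j \<le> yv y j"
        proof (cases "j = 1")
          case True
          have "os.Z x \<le> os.Z y" using finT k le T unfolding I_def by (intro order_stat_mono) auto
          then show ?thesis unfolding yv_def using True j g_mono by (simp add: mono_def)
        next
          case False then have j2: "j \<in> {2..m}" using j by auto
          have "f j x \<le> f j y" using f_mono[OF j2] x y le unfolding nondecr_fun_def vec_le_def sp I_def by auto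
          then show ?thesis unfolding yv_def using False j by simp
        qed
      qed
      have yvsp: "yv y \<in> space (vec_space m)" unfolding sp yv_def by simp
      show "\<Phi> x \<le> \<Phi> y"
      proof (cases "yv x \<in> D")
        case True
        then have "yv y \<in> D" using Dnd yvle yvsp unfolding nondecr_set_def by blast
        then show ?thesis unfolding \<Phi>_def by (simp add: indicator_def)
      qed (simp add: \<Phi>_def)
    qed
    obtain h where hmono: "mono h" and h01: "\<forall>s. 0 \<le> h s \<and> h s \<le> 1"
      and heq: "\<forall>B\<in>sets borel. (\<integral>\<^sup>+x. indicator B (g (os.Z x)) * ennreal (h (g (os.Z x))) \<partial>os.P) = (\<integral>\<^sup>+x. \<Phi> x * indicator B (g (os.Z x)) \<partial>os.P)"
      using os.core[OF \<Phi>m \<Phi>1 \<Phi>mono g_mono] by blast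
    define W where "W = (indicator {\<omega> \<in> space M. rvec m Y \<omega> \<in> D} :: 'a \<Rightarrow> real)"
    have W_eq: "W \<omega> = indicator D (yv (Xv \<omega>))" if "\<omega> \<in> space M" for \<omega>
      unfolding W_def using that rvecY by (simp add: indicator_def)
    have yvXm: "(\<lambda>\<omega>. yv (Xv \<omega>)) \<in> measurable M (vec_space m)"
      using measurable_compose[OF Xvm yvmB] .
    have Wm: "W \<in> borel_measurable M"
    proof -
      have "{\<omega> \<in> space M. rvec m Y \<omega> \<in> D} = (\<lambda>\<omega>. yv (Xv \<omega>)) -` D \<inter> space M" using rvecY by auto
      also have "\<dots> \<in> sets M" using measurable_sets[OF yvXm Dm] .
      finally show ?thesis unfolding W_def by simp
    qed
    have eq: "(\<integral>\<^sup>+\<omega>. indicator B (Y 1 \<omega>) * ennreal (h (Y 1 \<omega>)) \<partial>M) = (\<integral>\<^sup>+\<omega>. ennreal (W \<omega>) * indicator B (Y 1 \<omega>) \<partial>M)"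
      if B[measurable]: "B \<in> sets borel" for B
    proof -
      have hm[measurable]: "h \<in> borel_measurable borel" using hmono by (rule borel_measurable_mono)
      have F1m: "(\<lambda>x. indicator B (g (os.Z x)) * ennreal (h (g (os.Z x)))) \<in> borel_measurable (PiM I (\<lambda>_. borel))"
        by measurable
      have F2m: "(\<lambda>x. \<Phi> x * indicator B (g (os.Z x))) \<in> borel_measurable (PiM I (\<lambda>_. borel))"
        using \<Phi>m by (simp add: measurable_cong_sets[OF setsP refl])
      have "(\<integral>\<^sup>+\<omega>. indicator B (Y 1 \<omega>) * ennreal (h (Y 1 \<omega>)) \<partial>M)
          = (\<integral>\<^sup>+\<omega>. (\<lambda>x. indicator B (g (os.Z x)) * ennreal (h (g (os.Z x)))) (Xv \<omega>) \<partial>M)"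
        using Y1eq by simp
      also have "\<dots> = (\<integral>\<^sup>+x. indicator B (g (os.Z x)) * ennreal (h (g (os.Z x))) \<partial>distr M (PiM I (\<lambda>_. borel)) Xv)"
        using F1m by (intro nn_integral_distr[symmetric] Xvm) simp
      also have "\<dots> = (\<integral>\<^sup>+x. \<Phi> x * indicator B (g (os.Z x)) \<partial>os.P)" unfolding distrX using heq B by blast
      also have "\<dots> = (\<integral>\<^sup>+x. \<Phi> x * indicator B (g (os.Z x)) \<partial>distr M (PiM I (\<lambda>_. borel)) Xv)" unfolding distrX ..
      also have "\<dots> = (\<integral>\<^sup>+\<omega>. \<Phi> (Xv \<omega>) * indicator B (g (os.Z (Xv \<omega>))) \<partial>M)"
        using F2m by (intro nn_integral_distr Xvm) simp
      also have "\<dots> = (\<integral>\<^sup>+\<omega>. ennreal (W \<omega>) * indicator B (Y 1 \<omega>) \<partial>M)"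
        using W_eq Y1eq unfolding \<Phi>_def by (intro nn_integral_cong) (auto simp: indicator_def)
      finally show ?thesis .
    qed
    have "AE \<omega> in M. h (Y 1 \<omega>) = real_cond_exp M (vimage_algebra (space M) (Y 1) borel) W \<omega>"
      by (rule bridge[OF \<open>prob_space M\<close> Y1m Wm _ hmono _ eq]) (auto simp: W_def indicator_def h01)
    then show "\<exists>h :: real \<Rightarrow> real. mono h \<and>
           (AE \<omega> in M. h (Y i \<omega>) =
              real_cond_exp M (vimage_algebra (space M) (Y i) borel)
                 (indicator {\<omega>\<in>space M. rvec m Y \<omega> \<in> D}) \<omega>)"
      using hmono i1 unfolding W_def by blast
  qed
qed

end
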